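(* On a framework, $g^{is}g^{jt}R_{st}(\cdot)\bigl(F_{ij}\bigr)=0$, where the curvature operator acts on the covariant 2-tensor $F_{ij}$ by $R_{st}(\cdot)(F_{ij})=-R^a_{sti}F_{aj}-R^a_{stj}F_{ia}$.
   Context: Framework. Let $M$ be a connected real manifold. Lowercase Latin indices denote tangent-vector components in local coordinates; Greek indices denote components with respect to a basis of a real 4-dimensional vector space $V$ ("spinors"); summation convention. $M$ carries smooth fields $T^k_{ij}$ and $T^\alpha_{i\beta}$ with $T^\alpha_{i\lambda}T^\lambda_{j\beta}-T^\alpha_{j\lambda}T^\lambda_{i\beta}=T^k_{ij}T^\alpha_{k\beta}$, such that at every point the tangent space with bracket $[u,v]^k=T^k_{ij}u^iv^j$ is a Lie algebra isomorphic to $\mathfrak{so}(2,3)\cong\mathfrak{sp}(4,\mathbb R)$ and $u\mapsto u^iT^\alpha_{i\beta}$ is its 4-dimensional irreducible real representation on $V$. The local action $T_k(\cdot)$ acts on tensors by the Leibniz rule. There is a covariant derivative $\nabla_k=\partial_k+\Gamma_k(\cdot)$ on all tensors with vector and spinor indices (Leibniz rule, commuting with contractions) such that $[\nabla_i,\nabla_j]=T^k_{ij}\nabla_k+R_{ij}(\cdot)$ for a linear Leibniz operator $R_{ij}(\cdot)$ (curvature) trivial on functions, and $\nabla_kT^\alpha_{i\beta}=0$. Write $R_{ij}(\cdot)v^l=R^l_{ijk}v^k$ on vectors and $R_{ij}(\cdot)\psi^\beta=R^\beta_{ij\alpha}\psi^\alpha$ on spinors. Metric $g_{ij}=T^\alpha_{i\beta}T^\beta_{j\alpha}$,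 inverse $g^{ij}$. The field tensor is $F_{ij}=\tfrac14R^\alpha_{ij\alpha}$. *)

theory Defs
  imports "HOL-Analysis.Analysis"
begin

text \<open>Local model of the framework: a connected open coordinate domain U in R^10
  (the tangent space must be 10-dimensional, being isomorphic to so(2,3)).
  Vector (Latin) indices range over the numeral type 10, spinor (Greek) indices
  over the numeral type 4.  All sums over indices are sums over UNIV.\<close>

type_synonym pt = "real^10"

definition pd :: "10 \<Rightarrow> (pt \<Rightarrow> real) \<Rightarrow> pt \<Rightarrow> real" where
  "pd k f x = deriv (\<lambda>t. f (x + t *\<^sub>R axis k 1)) 0"

fun iter_pd :: "10 list \<Rightarrow> (pt \<Rightarrow> real) \<Rightarrow> pt \<Rightarrow> real" where
  "iter_pd [] f = f"
| "iter_pd (k # ks) f = pd k (iter_pd ks f)"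

definition smooth_on :: "pt set \<Rightarrow> (pt \<Rightarrow> real) \<Rightarrow> bool" where
  "smooth_on U f \<longleftrightarrow> (\<forall>ks. iter_pd ks f differentiable_on U)"

definition Jsp :: "4 \<Rightarrow> 4 \<Rightarrow> real" where
  "Jsp a b = (if a = 0 \<and> b = 2 then 1 else if a = 1 \<and> b = 3 then 1
              else if a = 2 \<and> b = 0 then -1 else if a = 3 \<and> b = 1 then -1 else 0)"

definition sp4 :: "(4 \<Rightarrow> 4 \<Rightarrow> real) set" where
  "sp4 = {A. \<forall>a b. (\<Sum>c\<in>UNIV. A c a * Jsp c b) + (\<Sum>c\<in>UNIV. Jsp a c * A c b) = 0}"

definition mat_comm :: "(4 \<Rightarrow> 4 \<Rightarrow> real) \<Rightarrow> (4 \<Rightarrow> 4 \<Rightarrow> real) \<Rightarrow> 4 \<Rightarrow> 4 \<Rightarrow> real" where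
  "mat_comm A B = (\<lambda>a b. (\<Sum>c\<in>UNIV. A a c * B c b) - (\<Sum>c\<in>UNIV. B a c * A c b))"

text \<open>Tv x k i j = T^k_{ij}(x);  Ts x i \<alpha> \<beta> = T^\<alpha>_{i\<beta>}(x).\<close>
definition bracket :: "(pt \<Rightarrow> 10 \<Rightarrow> 10 \<Rightarrow> 10 \<Rightarrow> real) \<Rightarrow> pt \<Rightarrow> (10 \<Rightarrow> real) \<Rightarrow> (10 \<Rightarrow> real) \<Rightarrow> 10 \<Rightarrow> real" where
  "bracket Tv x u v = (\<lambda>k. \<Sum>i\<in>UNIV. \<Sum>j\<in>UNIV. Tv x k i j * u i * v j)"

definition rep :: "(pt \<Rightarrow> 10 \<Rightarrow> 4 \<Rightarrow> 4 \<Rightarrow> real) \<Rightarrow> pt \<Rightarrow> (10 \<Rightarrow> real) \<Rightarrow> 4 \<Rightarrow> 4 \<Rightarrow> real" where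
  "rep Ts x u = (\<lambda>a b. \<Sum>i\<in>UNIV. u i * Ts x i a b)"

definition lie_iso_sp4 :: "(pt \<Rightarrow> 10 \<Rightarrow> 10 \<Rightarrow> 10 \<Rightarrow> real) \<Rightarrow> pt \<Rightarrow> bool" where
  "lie_iso_sp4 Tv x \<longleftrightarrow> (\<exists>\<phi> :: (10 \<Rightarrow> real) \<Rightarrow> (4 \<Rightarrow> 4 \<Rightarrow> real).
      (\<forall>a b u v. \<phi> (\<lambda>k. a * u k + b * v k) = (\<lambda>p q. a * \<phi> u p q + b * \<phi> v p q))
    \<and> inj \<phi> \<and> range \<phi> = sp4
    \<and> (\<forall>u v. \<phi> (bracket Tv x u v) = mat_comm (\<phi> u) (\<phi> v)))"

definition irreducible_rep :: "(pt \<Rightarrow> 10 \<Rightarrow> 4 \<Rightarrow> 4 \<Rightarrow> real) \<Rightarrow> pt \<Rightarrow> bool" where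
  "irreducible_rep Ts x \<longleftrightarrow> (\<forall>W :: (real^4) set.
      subspace W \<and> (\<forall>u. \<forall>\<psi>\<in>W. (\<chi> a. \<Sum>b\<in>UNIV. rep Ts x u a b * \<psi> $ b) \<in> W)
      \<longrightarrow> W = {0} \<or> W = UNIV)"

text \<open>Connection coefficients: Gv x l k j = \<Gamma>^l_{kj}, i.e. \<nabla>_k v^l = \<partial>_k v^l + \<Gamma>^l_{kj} v^j;
  Gs x \<alpha> k \<beta> = \<Gamma>^\<alpha>_{k\<beta>}, i.e. \<nabla>_k \<psi>^\<alpha> = \<partial>_k \<psi>^\<alpha> + \<Gamma>^\<alpha>_{k\<beta>} \<psi>^\<beta>.
  Extended to all tensors by the Leibniz rule, commuting with contractions.\<close>

definition nabla_nabla_fun :: "(pt \<Rightarrow> 10 \<Rightarrow> 10 \<Rightarrow> 10 \<Rightarrow> real) \<Rightarrow> (pt \<Rightarrow> real) \<Rightarrow> 10 \<Rightarrow> 10 \<Rightarrow> pt \<Rightarrow> real" where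
  "nabla_nabla_fun Gv f i j x = pd i (pd j f) x - (\<Sum>m\<in>UNIV. Gv x m i j * pd m f x)"

definition nabla_vec :: "(pt \<Rightarrow> 10 \<Rightarrow> 10 \<Rightarrow> 10 \<Rightarrow> real) \<Rightarrow> (pt \<Rightarrow> 10 \<Rightarrow> real) \<Rightarrow> 10 \<Rightarrow> 10 \<Rightarrow> pt \<Rightarrow> real" where
  "nabla_vec Gv v k l x = pd k (\<lambda>y. v y l) x + (\<Sum>j\<in>UNIV. Gv x l k j * v x j)"

definition nabla_nabla_vec :: "(pt \<Rightarrow> 10 \<Rightarrow> 10 \<Rightarrow> 10 \<Rightarrow> real) \<Rightarrow> (pt \<Rightarrow> 10 \<Rightarrow> real) \<Rightarrow> 10 \<Rightarrow> 10 \<Rightarrow> 10 \<Rightarrow> pt \<Rightarrow> real" where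
  "nabla_nabla_vec Gv v i j l x = pd i (nabla_vec Gv v j l) x
     - (\<Sum>m\<in>UNIV. Gv x m i j * nabla_vec Gv v m l x) + (\<Sum>m\<in>UNIV. Gv x l i m * nabla_vec Gv v j m x)"

definition nabla_spin :: "(pt \<Rightarrow> 4 \<Rightarrow> 10 \<Rightarrow> 4 \<Rightarrow> real) \<Rightarrow> (pt \<Rightarrow> 4 \<Rightarrow> real) \<Rightarrow> 10 \<Rightarrow> 4 \<Rightarrow> pt \<Rightarrow> real" where
  "nabla_spin Gs \<psi> k a x = pd k (\<lambda>y. \<psi> y a) x + (\<Sum>b\<in>UNIV. Gs x a k b * \<psi> x b)"

definition nabla_nabla_spin :: "(pt \<Rightarrow> 10 \<Rightarrow> 10 \<Rightarrow> 10 \<Rightarrow> real) \<Rightarrow> (pt \<Rightarrow> 4 \<Rightarrow> 10 \<Rightarrow> 4 \<Rightarrow> real)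
    \<Rightarrow> (pt \<Rightarrow> 4 \<Rightarrow> real) \<Rightarrow> 10 \<Rightarrow> 10 \<Rightarrow> 4 \<Rightarrow> pt \<Rightarrow> real" where
  "nabla_nabla_spin Gv Gs \<psi> i j a x = pd i (nabla_spin Gs \<psi> j a) x
     - (\<Sum>m\<in>UNIV. Gv x m i j * nabla_spin Gs \<psi> m a x) + (\<Sum>b\<in>UNIV. Gs x a i b * nabla_spin Gs \<psi> j b x)"

definition nabla_Ts :: "(pt \<Rightarrow> 10 \<Rightarrow> 10 \<Rightarrow> 10 \<Rightarrow> real) \<Rightarrow> (pt \<Rightarrow> 4 \<Rightarrow> 10 \<Rightarrow> 4 \<Rightarrow> real)
    \<Rightarrow> (pt \<Rightarrow> 10 \<Rightarrow> 4 \<Rightarrow> 4 \<Rightarrow> real) \<Rightarrow> 10 \<Rightarrow> 10 \<Rightarrow> 4 \<Rightarrow> 4 \<Rightarrow> pt \<Rightarrow> real" where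
  "nabla_Ts Gv Gs Ts k i a b x = pd k (\<lambda>y. Ts y i a b) x
     - (\<Sum>m\<in>UNIV. Gv x m k i * Ts x m a b)
     + (\<Sum>c\<in>UNIV. Gs x a k c * Ts x i c b) - (\<Sum>c\<in>UNIV. Gs x c k b * Ts x i a c)"

text \<open>A framework on the (connected, open) coordinate domain U, with connection
  coefficients Gv, Gs and curvature components Rv x l i j k = R^l_{ijk},
  Rs x \<alpha> i j \<beta> = R^\<alpha>_{ij\<beta>}.\<close>
definition framework ::
  "pt set \<Rightarrow> (pt \<Rightarrow> 10 \<Rightarrow> 10 \<Rightarrow> 10 \<Rightarrow> real) \<Rightarrow> (pt \<Rightarrow> 10 \<Rightarrow> 4 \<Rightarrow> 4 \<Rightarrow> real)
   \<Rightarrow> (pt \<Rightarrow> 10 \<Rightarrow> 10 \<Rightarrow> 10 \<Rightarrow> real) \<Rightarrow> (pt \<Rightarrow> 4 \<Rightarrow> 10 \<Rightarrow> 4 \<Rightarrow> real)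
   \<Rightarrow> (pt \<Rightarrow> 10 \<Rightarrow> 10 \<Rightarrow> 10 \<Rightarrow> 10 \<Rightarrow> real) \<Rightarrow> (pt \<Rightarrow> 4 \<Rightarrow> 10 \<Rightarrow> 10 \<Rightarrow> 4 \<Rightarrow> real) \<Rightarrow> bool" where
  "framework U Tv Ts Gv Gs Rv Rs \<longleftrightarrow>
     open U \<and> connected U \<and> U \<noteq> {}
   \<and> (\<forall>k i j. smooth_on U (\<lambda>x. Tv x k i j))
   \<and> (\<forall>i a b. smooth_on U (\<lambda>x. Ts x i a b))
   \<and> (\<forall>l k j. smooth_on U (\<lambda>x. Gv x l k j))
   \<and> (\<forall>a k b. smooth_on U (\<lambda>x. Gs x a k b))
   \<and> (\<forall>x\<in>U. \<forall>i j a b.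
        (\<Sum>c\<in>UNIV. Ts x i a c * Ts x j c b) - (\<Sum>c\<in>UNIV. Ts x j a c * Ts x i c b)
        = (\<Sum>k\<in>UNIV. Tv x k i j * Ts x k a b))
   \<and> (\<forall>x\<in>U. lie_iso_sp4 Tv x \<and> irreducible_rep Ts x)
   \<comment> \<open>[\<nabla>_i,\<nabla>_j] f = T^k_{ij} \<nabla>_k f on functions (R trivial on functions)\<close>
   \<and> (\<forall>f. smooth_on U f \<longrightarrow> (\<forall>x\<in>U. \<forall>i j.
        nabla_nabla_fun Gv f i j x - nabla_nabla_fun Gv f j i x = (\<Sum>k\<in>UNIV. Tv x k i j * pd k f x)))
   \<comment> \<open>[\<nabla>_i,\<nabla>_j] v = T^k_{ij} \<nabla>_k v + R_{ij}(v) on vector fields\<close>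
   \<and> (\<forall>v. (\<forall>l. smooth_on U (\<lambda>y. v y l)) \<longrightarrow> (\<forall>x\<in>U. \<forall>i j l.
        nabla_nabla_vec Gv v i j l x - nabla_nabla_vec Gv v j i l x
        = (\<Sum>k\<in>UNIV. Tv x k i j * nabla_vec Gv v k l x) + (\<Sum>k\<in>UNIV. Rv x l i j k * v x k)))
   \<comment> \<open>[\<nabla>_i,\<nabla>_j] \<psi> = T^k_{ij} \<nabla>_k \<psi> + R_{ij}(\<psi>) on spinor fields\<close>
   \<and> (\<forall>\<psi>. (\<forall>a. smooth_on U (\<lambda>y. \<psi> y a)) \<longrightarrow> (\<forall>x\<in>U. \<forall>i j a.
        nabla_nabla_spin Gv Gs \<psi> i j a x - nabla_nabla_spin Gv Gs \<psi> j i a x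
        = (\<Sum>k\<in>UNIV. Tv x k i j * nabla_spin Gs \<psi> k a x) + (\<Sum>b\<in>UNIV. Rs x a i j b * \<psi> x b)))
   \<comment> \<open>\<nabla>_k T^\<alpha>_{i\<beta>} = 0\<close>
   \<and> (\<forall>x\<in>U. \<forall>k i a b. nabla_Ts Gv Gs Ts k i a b x = 0)"

definition metric :: "(pt \<Rightarrow> 10 \<Rightarrow> 4 \<Rightarrow> 4 \<Rightarrow> real) \<Rightarrow> pt \<Rightarrow> 10 \<Rightarrow> 10 \<Rightarrow> real" where
  "metric Ts x i j = (\<Sum>a\<in>UNIV. \<Sum>b\<in>UNIV. Ts x i a b * Ts x j b a)"

definition inv_metric :: "(pt \<Rightarrow> 10 \<Rightarrow> 4 \<Rightarrow> 4 \<Rightarrow> real) \<Rightarrow> pt \<Rightarrow> 10 \<Rightarrow> 10 \<Rightarrow> real" where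
  "inv_metric Ts x i j = matrix_inv (\<chi> p q. metric Ts x p q) $ i $ j"

definition field_tensor :: "(pt \<Rightarrow> 4 \<Rightarrow> 10 \<Rightarrow> 10 \<Rightarrow> 4 \<Rightarrow> real) \<Rightarrow> pt \<Rightarrow> 10 \<Rightarrow> 10 \<Rightarrow> real" where
  "field_tensor Rs x i j = (1/4) * (\<Sum>a\<in>UNIV. Rs x a i j a)"

definition curv_on_F :: "(pt \<Rightarrow> 10 \<Rightarrow> 10 \<Rightarrow> 10 \<Rightarrow> 10 \<Rightarrow> real) \<Rightarrow> (pt \<Rightarrow> 4 \<Rightarrow> 10 \<Rightarrow> 10 \<Rightarrow> 4 \<Rightarrow> real)
    \<Rightarrow> pt \<Rightarrow> 10 \<Rightarrow> 10 \<Rightarrow> 10 \<Rightarrow> 10 \<Rightarrow> real" where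
  "curv_on_F Rv Rs x s t i j =
     - (\<Sum>a\<in>UNIV. Rv x a s t i * field_tensor Rs x a j) - (\<Sum>a\<in>UNIV. Rv x a s t j * field_tensor Rs x i a)"

end

theory Submission
  imports Defs
begin


definition JJ :: "real^4^4" where "JJ = (\<chi> i j. Jsp i j)"
definition S4 :: "(real^4^4) set" where "S4 = {A. transpose A ** JJ + JJ ** A = 0}"
definition outer :: "real^4 \<Rightarrow> real^4 \<Rightarrow> real^4^4" where "outer a b = (\<chi> i j. a$i * b$j)"
definition Qm :: "real^4 \<Rightarrow> real^4 \<Rightarrow> real^4^4" where "Qm a b = (outer a b + outer b a) ** JJ"
definition cm :: "real^4^4 \<Rightarrow> real^4^4 \<Rightarrow> real^4^4" where "cm X Y = X ** Y - Y ** X"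

lemma mm_add_r: "(A + B) ** (C::real^4^4) = A ** C + B ** C"
  by (simp add: matrix_matrix_mult_def vec_eq_iff sum.distrib algebra_simps)
lemma mm_diff_r: "(A - B) ** (C::real^4^4) = A ** C - B ** C"
  by (simp add: matrix_matrix_mult_def vec_eq_iff sum_subtractf algebra_simps)
lemma mm_diff_l: "(C::real^4^4) ** (A - B) = C ** A - C ** B"
  by (simp add: matrix_matrix_mult_def vec_eq_iff sum_subtractf algebra_simps)
lemma mm_neg_l: "(- A) ** (C::real^4^4) = - (A ** C)"
  by (simp add: matrix_matrix_mult_def vec_eq_iff sum_negf)
lemma mm_neg_r: "(C::real^4^4) ** (- A) = - (C ** A)"
  by (simp add: matrix_matrix_mult_def vec_eq_iff sum_negf)
lemma tr_add: "transpose (A + B) = transpose A + transpose (B::real^4^4)"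
  by (simp add: transpose_def vec_eq_iff)
lemma tr_neg: "transpose (- A) = - transpose (A::real^4^4)"
  by (simp add: transpose_def vec_eq_iff)

lemma neg_of_add0: "a + b = 0 \<Longrightarrow> - b = (a::'a::ab_group_add)"
  by (metis add.commute add.inverse_unique)

lemma mm_sum_r: "(\<Sum>i\<in>F. f i) ** (C::real^4^4) = (\<Sum>i\<in>F. f i ** C)"
  by (induction F rule: infinite_finite_induct) (simp_all add: mm_add_r)

lemma JJ_transpose: "transpose JJ = - JJ"
  by (simp add: JJ_def vec_eq_iff transpose_def Jsp_def forall_4)

lemma JJ_sq: "JJ ** JJ = - mat 1"
  by (simp add: JJ_def vec_eq_iff matrix_matrix_mult_def Jsp_def forall_4 sum_4 mat_def)

lemma JJ_iso: "(JJ *v v) \<bullet> v = 0"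
  by (simp add: JJ_def inner_vec_def matrix_vector_mult_def Jsp_def sum_4 algebra_simps)

lemma outer_mul_left: "C ** outer a b = outer (C *v a) b"
  by (simp add: outer_def vec_eq_iff matrix_matrix_mult_def matrix_vector_mult_def sum_distrib_right mult.assoc)

lemma outer_mul_right: "outer a b ** C = outer a (transpose C *v b)"
  by (simp add: outer_def vec_eq_iff matrix_matrix_mult_def matrix_vector_mult_def transpose_def sum_distrib_left mult.assoc mult.commute mult.left_commute)

lemma outer_outer: "outer a b ** outer c d = (b \<bullet> c) *\<^sub>R outer a d"
  by (simp add: outer_def vec_eq_iff matrix_matrix_mult_def inner_vec_def sum_distrib_left sum_distrib_right mult_ac)

lemma outer_add_left: "outer (a + b) c = outer a c + outer b c"
  by (simp add: outer_def vec_eq_iff algebra_simps)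
lemma outer_add_right: "outer c (a + b) = outer c a + outer c b"
  by (simp add: outer_def vec_eq_iff algebra_simps)
lemma outer_scale_left: "outer (r *\<^sub>R a) c = r *\<^sub>R outer a c"
  by (simp add: outer_def vec_eq_iff algebra_simps)
lemma outer_scale_right: "outer c (r *\<^sub>R a) = r *\<^sub>R outer c a"
  by (simp add: outer_def vec_eq_iff algebra_simps)
lemma transpose_outer: "transpose (outer a b) = outer b a"
  by (simp add: outer_def vec_eq_iff transpose_def)

lemma S4_JJ: "X \<in> S4 \<Longrightarrow> JJ ** X = - (transpose X ** JJ)"
  unfolding S4_def by (simp add: eq_neg_iff_add_eq_0 add.commute)

lemma Qm_S4: "Qm a b \<in> S4"
proof -
  let ?S = "outer a b + outer b a"
  have tS: "transpose ?S = ?S" by (simp add: outer_def transpose_def vec_eq_iff mult.commute)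
  have "transpose (Qm a b) = - (JJ ** ?S)"
    unfolding Qm_def matrix_transpose_mul tS JJ_transpose by (simp add: mm_neg_l)
  then have "transpose (Qm a b) ** JJ = - (JJ ** ?S ** JJ)"
    by (simp add: mm_neg_l)
  moreover have "JJ ** Qm a b = JJ ** ?S ** JJ" by (simp add: Qm_def matrix_mul_assoc)
  ultimately show ?thesis unfolding S4_def by simp
qed

lemma cm_Qm:
  assumes X: "X \<in> S4"
  shows "cm X (Qm a b) = Qm (X *v a) b + Qm a (X *v b)"
proof -
  let ?S = "outer a b + outer b a"
  have 1: "X ** Qm a b = (outer (X *v a) b + outer (X *v b) a) ** JJ"
    unfolding Qm_def matrix_mul_assoc matrix_add_ldistrib outer_mul_left ..
  have 2: "Qm a b ** X = - ((outer a (X *v b) + outer b (X *v a)) ** JJ)"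
    unfolding Qm_def matrix_mul_assoc[symmetric] S4_JJ[OF X] mm_neg_r
    by (simp add: matrix_mul_assoc mm_add_r outer_mul_right)
  have "cm X (Qm a b) = X ** Qm a b - Qm a b ** X" by (simp add: cm_def)
  also have "\<dots> = Qm (X *v a) b + Qm a (X *v b)" unfolding 1 2 unfolding Qm_def
    by (simp add: mm_add_r outer_add_left outer_add_right algebra_simps)
  finally show ?thesis .
qed

lemma NN_zero: "(outer v v ** JJ) ** (outer v v ** JJ) = 0"
proof -
  have "(outer v v ** JJ) ** (outer v v ** JJ) = outer v v ** (JJ ** outer v v) ** JJ"
    by (simp add: matrix_mul_assoc)
  also have "\<dots> = 0" unfolding outer_mul_left[of JJ] outer_outer
    using JJ_iso[of v] by (simp add: inner_commute)
  finally show ?thesis .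
qed

lemma NAN: "(outer v v ** JJ) ** A ** (outer v v ** JJ) = (v \<bullet> ((JJ ** A) *v v)) *\<^sub>R (outer v v ** JJ)"
proof -
  have "(outer v v ** JJ) ** A ** (outer v v ** JJ) = outer v v ** ((JJ ** A) ** outer v v) ** JJ"
    by (simp add: matrix_mul_assoc)
  also have "\<dots> = (v \<bullet> ((JJ ** A) *v v)) *\<^sub>R (outer v v ** JJ)" unfolding outer_mul_left[of "JJ ** A"] outer_outer
    by (simp add: scalar_matrix_assoc)
  finally show ?thesis .
qed

lemma cm_N_N: "cm (outer v v ** JJ) (cm (outer v v ** JJ) A) = (-2 * (v \<bullet> ((JJ ** A) *v v))) *\<^sub>R (outer v v ** JJ)"
proof -
  let ?N = "outer v v ** JJ"
  have "cm ?N (cm ?N A) = (?N ** ?N) ** A - ?N ** A ** ?N - ?N ** A ** ?N + A ** (?N ** ?N)"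
    unfolding cm_def mm_diff_l mm_diff_r by (simp add: matrix_mul_assoc)
  also have "\<dots> = - (2 *\<^sub>R (?N ** A ** ?N))" unfolding NN_zero
    by (simp add: vec_eq_iff matrix_matrix_mult_def)
  finally show ?thesis unfolding NAN by simp
qed

lemma Qm_vv: "Qm v v = 2 *\<^sub>R (outer v v ** JJ)"
  by (simp add: Qm_def scalar_matrix_assoc scaleR_2)

lemma Qm_sym: "Qm a b = Qm b a"
  by (simp add: Qm_def add.commute)

lemma outer_mulv: "outer a b *v c = (b \<bullet> c) *\<^sub>R a"
  by (simp add: outer_def vec_eq_iff matrix_vector_mult_def inner_vec_def sum_distrib_left mult_ac)

lemma JJ_inj: "JJ *v v = 0 \<Longrightarrow> v = 0"
proof -
  assume "JJ *v v = 0"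
  then have "JJ *v (JJ *v v) = 0" by simp
  then show "v = 0" unfolding matrix_vector_mul_assoc JJ_sq by (simp add: vec_eq_iff matrix_vector_mult_def mat_def if_distrib if_distribR sum.delta cong: if_cong)
qed

lemma matrix_outer_sum: "(M::real^4^4) = (\<Sum>i\<in>UNIV. outer (axis i 1) (M$i))"
  by (simp add: vec_eq_iff outer_def sum_component axis_def if_distrib if_distribR sum.delta cong: if_cong)

lemma sym_quad_zero:
  fixes S :: "real^4^4"
  assumes sym: "transpose S = S" and q: "\<And>v. v \<bullet> (S *v v) = 0"
  shows "S = 0"
proof -
  have e: "axis i 1 \<bullet> (S *v axis j 1) = S$i$j" for i j
    by (simp add: inner_axis' matrix_vector_mult_basis column_def)
  have sij: "S$j$i = S$i$j" for i j
  proof -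
    have "S$j$i = (transpose S)$j$i" using sym by simp
    also have "\<dots> = S$i$j" by (simp add: transpose_def)
    finally show ?thesis .
  qed
  have "S$i$j = 0" for i j
  proof -
    have "(axis i 1 + axis j 1) \<bullet> (S *v (axis i 1 + axis j 1)) = 0" by (rule q)
    then have "S$i$i + S$i$j + S$j$i + S$j$j = 0"
      by (simp add: matrix_vector_right_distrib inner_add_left inner_add_right e)
    moreover have "S$i$i = 0" using q[of "axis i 1"] e by simp
    moreover have "S$j$j = 0" using q[of "axis j 1"] e by simp
    ultimately show ?thesis using sij[of i j] by simp
  qed
  then show ?thesis by (simp add: vec_eq_iff)
qed

lemma S4_simple:
  assumes sub: "subspace I" and IS: "I \<subseteq> S4" and idl: "\<And>X A. X \<in> S4 \<Longrightarrow> A \<in> I \<Longrightarrow> cm X A \<in> I"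
    and AI: "A \<in> I" and A0: "A \<noteq> 0"
  shows "S4 \<subseteq> I"
proof -
  have AS: "A \<in> S4" using AI IS by auto
  let ?S = "JJ ** A"
  have symS: "transpose ?S = ?S"
  proof -
    have "transpose A ** JJ + JJ ** A = 0" using AS unfolding S4_def by simp
    then have "- (transpose A ** JJ) = JJ ** A" by (rule add.inverse_unique)
    then show ?thesis unfolding matrix_transpose_mul JJ_transpose mm_neg_r .
  qed
  have S0: "?S \<noteq> 0"
  proof
    assume "?S = 0"
    then have "JJ ** ?S = 0" by simp
    then have "A = 0" unfolding matrix_mul_assoc JJ_sq mm_neg_l by simp
    then show False using A0 by simp
  qed
  obtain v where qv: "v \<bullet> (?S *v v) \<noteq> 0" using sym_quad_zero[OF symS] S0 by blast
  let ?N = "outer v v ** JJ"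
  have NS: "?N \<in> S4"
  proof -
    have "(1/2) *\<^sub>R Qm v v \<in> S4" using Qm_S4[of v v] unfolding S4_def
      by (simp add: transpose_scalar scalar_matrix_assoc[symmetric] matrix_scalar_ac scaleR_right_distrib[symmetric])
    then show ?thesis by (simp add: Qm_vv)
  qed
  have "cm ?N (cm ?N A) \<in> I" using idl[OF NS] idl[OF NS AI] by blast
  then have "(-2 * (v \<bullet> (?S *v v))) *\<^sub>R ?N \<in> I" by (simp add: cm_N_N)
  then have "(1 / (-2 * (v \<bullet> (?S *v v)))) *\<^sub>R ((-2 * (v \<bullet> (?S *v v))) *\<^sub>R ?N) \<in> I"
    by (rule subspace_mul[OF sub])
  then have NI: "?N \<in> I" using qv by simp
  have QvvI: "Qm v v \<in> I" unfolding Qm_vv using NI by (rule subspace_mul[OF sub])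
  have v0: "v \<noteq> 0" using qv by auto
  let ?u = "JJ *v v"
  have u0: "?u \<noteq> 0" using JJ_inj v0 by blast
  have surj: "\<exists>X\<in>S4. X *v v = w" for w
  proof -
    define b where "b = (1 / (?u \<bullet> ?u)) *\<^sub>R ?u"
    have bu: "b \<bullet> ?u = 1" using u0 by (simp add: b_def)
    define a where "a = w - ((w \<bullet> ?u) / 2) *\<^sub>R b"
    have au: "a \<bullet> ?u = (w \<bullet> ?u) / 2" by (simp add: a_def inner_diff_left bu)
    have "Qm a b *v v = (b \<bullet> ?u) *\<^sub>R a + (a \<bullet> ?u) *\<^sub>R b"
      unfolding Qm_def matrix_vector_mul_assoc[symmetric] matrix_vector_mult_add_rdistrib outer_mulv ..
    also have "\<dots> = w" unfolding bu au by (simp add: a_def)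
    finally have "Qm a b *v v = w" .
    then show ?thesis using Qm_S4 by blast
  qed
  have QwvI: "Qm w v \<in> I" for w
  proof -
    obtain X where X: "X \<in> S4" "X *v v = w" using surj by blast
    have "cm X (Qm v v) \<in> I" using idl[OF X(1) QvvI] .
    then have "2 *\<^sub>R Qm w v \<in> I" using X by (simp add: cm_Qm Qm_sym[of v w] scaleR_2)
    then have "(1/2) *\<^sub>R (2 *\<^sub>R Qm w v) \<in> I" by (rule subspace_mul[OF sub])
    then show ?thesis by simp
  qed
  have QI: "Qm w z \<in> I" for w z
  proof -
    obtain X where X: "X \<in> S4" "X *v v = z" using surj by blast
    have "cm X (Qm w v) \<in> I" using idl[OF X(1) QwvI] .
    then have "Qm (X *v w) v + Qm w z \<in> I" using X by (simp add: cm_Qm)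
    then have "(Qm (X *v w) v + Qm w z) - Qm (X *v w) v \<in> I" by (rule subspace_diff[OF sub _ QwvI])
    then show ?thesis by simp
  qed
  show "S4 \<subseteq> I"
  proof
    fix B assume BS: "B \<in> S4"
    define S' where "S' = - (B ** JJ)"
    have BS': "B = S' ** JJ" unfolding S'_def mm_neg_l matrix_mul_assoc[symmetric] JJ_sq by (simp add: mm_neg_r)
    have tB: "transpose B = JJ ** B ** JJ"
    proof -
      have "transpose B ** JJ + JJ ** B = 0" using BS unfolding S4_def by simp
      then have "transpose B ** JJ = - (JJ ** B)" by (metis add.inverse_unique minus_minus)
      then have "transpose B ** JJ ** JJ = - (JJ ** B) ** JJ" by simp
      then show ?thesis unfolding matrix_mul_assoc[symmetric] JJ_sq mm_neg_l mm_neg_r by simp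
    qed
    have symS': "transpose S' = S'"
      unfolding S'_def tr_neg matrix_transpose_mul JJ_transpose tB mm_neg_l
      by (simp add: matrix_mul_assoc JJ_sq mm_neg_l)
    have "S' + transpose S' = (\<Sum>i\<in>UNIV. outer (axis i 1) (S'$i) + outer (S'$i) (axis i 1))"
    proof -
      have "transpose S' = (\<Sum>i\<in>UNIV. outer (S'$i) (axis i 1))"
        by (simp add: vec_eq_iff outer_def sum_component axis_def transpose_def if_distrib if_distribR sum.delta cong: if_cong)
      then show ?thesis using matrix_outer_sum[of S'] by (simp add: sum.distrib)
    qed
    then have "2 *\<^sub>R S' = (\<Sum>i\<in>UNIV. outer (axis i 1) (S'$i) + outer (S'$i) (axis i 1))"
      using symS' by (simp add: scaleR_2)
    then have "2 *\<^sub>R B = (\<Sum>i\<in>UNIV. Qm (axis i 1) (S'$i))"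
      unfolding BS' Qm_def by (simp add: scalar_matrix_assoc matrix_mult_sum[symmetric] mm_sum_r)
    moreover have "(\<Sum>i\<in>UNIV. Qm (axis i 1) (S'$i)) \<in> I" by (rule subspace_sum[OF sub], rule QI)
    ultimately have "2 *\<^sub>R B \<in> I" by simp
    then have "(1/2) *\<^sub>R (2 *\<^sub>R B) \<in> I" by (rule subspace_mul[OF sub])
    then show "B \<in> I" by simp
  qed
qed


definition toM :: "(4 \<Rightarrow> 4 \<Rightarrow> real) \<Rightarrow> real^4^4" where "toM A = (\<chi> i j. A i j)"

lemma toM_inj: "toM A = toM B \<Longrightarrow> A = B"
  by (auto simp: toM_def vec_eq_iff fun_eq_iff)

lemma toM_comm: "toM (mat_comm A B) = cm (toM A) (toM B)"
  by (simp add: toM_def mat_comm_def cm_def vec_eq_iff matrix_matrix_mult_def)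

lemma sp4_S4: "A \<in> sp4 \<longleftrightarrow> toM A \<in> S4"
  by (simp add: sp4_def S4_def toM_def vec_eq_iff matrix_matrix_mult_def transpose_def JJ_def)

lemma toM_surj: "X = toM (\<lambda>i j. X$i$j)"
  by (simp add: toM_def vec_eq_iff)

lemma ideal_full:
  assumes iso: "lie_iso_sp4 Tv x"
    and lin: "\<And>u v a b. u \<in> K \<Longrightarrow> v \<in> K \<Longrightarrow> (\<lambda>k. a * u k + b * v k) \<in> K"
    and idl: "\<And>w u. u \<in> K \<Longrightarrow> bracket Tv x w u \<in> K"
    and uK: "u \<in> K" and u0: "u \<noteq> (\<lambda>k. 0)"
  shows "K = UNIV"
proof -
  obtain \<phi> :: "(10 \<Rightarrow> real) \<Rightarrow> (4 \<Rightarrow> 4 \<Rightarrow> real)" where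
    phil: "\<And>a b u v. \<phi> (\<lambda>k. a * u k + b * v k) = (\<lambda>p q. a * \<phi> u p q + b * \<phi> v p q)"
    and inj: "inj \<phi>" and rng: "range \<phi> = sp4"
    and hom: "\<And>u v. \<phi> (bracket Tv x u v) = mat_comm (\<phi> u) (\<phi> v)"
    using iso unfolding lie_iso_sp4_def by blast
  define I where "I = toM ` \<phi> ` K"
  have sub: "subspace I" unfolding subspace_def
  proof (intro conjI ballI allI)
    have "(\<lambda>k. 0 * u k + 0 * u k) \<in> K" using lin uK by blast
    then have "(\<lambda>k::10. 0::real) \<in> K" by simp
    moreover have "\<phi> (\<lambda>k. 0) = (\<lambda>p q. 0)" using phil[of 0 u 0 u] by simp
    ultimately show "0 \<in> I" unfolding I_def by (force simp: toM_def vec_eq_iff)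
  next
    fix A B assume "A \<in> I" "B \<in> I"
    then obtain a b where ab: "a \<in> K" "b \<in> K" "A = toM (\<phi> a)" "B = toM (\<phi> b)" unfolding I_def by blast
    have "A + B = toM (\<phi> (\<lambda>k. 1 * a k + 1 * b k))" unfolding phil ab by (simp add: toM_def vec_eq_iff)
    then show "A + B \<in> I" unfolding I_def using lin[OF ab(1,2)] by blast
  next
    fix c A assume "A \<in> I"
    then obtain a where ab: "a \<in> K" "A = toM (\<phi> a)" unfolding I_def by blast
    have "c *\<^sub>R A = toM (\<phi> (\<lambda>k. c * a k + 0 * a k))" unfolding phil ab by (simp add: toM_def vec_eq_iff)
    then show "c *\<^sub>R A \<in> I" unfolding I_def using lin[OF ab(1,1)] by blast
  qed
  have IS: "I \<subseteq> S4" unfolding I_def using rng sp4_S4 by blast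
  have idI: "cm X A \<in> I" if X: "X \<in> S4" and A: "A \<in> I" for X A
  proof -
    obtain a where ab: "a \<in> K" "A = toM (\<phi> a)" using A unfolding I_def by blast
    have "(\<lambda>i j. X$i$j) \<in> sp4" using X toM_surj[of X] sp4_S4 by simp
    then obtain w where w: "\<phi> w = (\<lambda>i j. X$i$j)" using rng by (metis (no_types, lifting) imageE)
    have "cm X A = toM (\<phi> (bracket Tv x w a))"
      unfolding hom toM_comm ab w[symmetric] using toM_surj[of X] w by simp
    then show ?thesis unfolding I_def using idl[OF ab(1)] by blast
  qed
  have A0: "toM (\<phi> u) \<noteq> 0"
  proof
    assume "toM (\<phi> u) = 0"
    then have "\<phi> u = (\<lambda>p q. 0)" by (auto simp: toM_def vec_eq_iff fun_eq_iff)
    moreover have "\<phi> (\<lambda>k. 0) = (\<lambda>p q. 0)" using phil[of 0 u 0 u] by simp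
    ultimately show False using inj u0 by (metis injD)
  qed
  have full: "S4 \<subseteq> I" by (rule S4_simple[OF sub IS idI _ A0]) (auto simp: I_def uK)
  show "K = UNIV"
  proof (intro set_eqI iffI)
    fix v :: "10 \<Rightarrow> real"
    have "toM (\<phi> v) \<in> S4" using rng sp4_S4 by blast
    then have "toM (\<phi> v) \<in> I" using full by blast
    then obtain v' where "v' \<in> K" "toM (\<phi> v) = toM (\<phi> v')" unfolding I_def by blast
    then show "v \<in> K" using inj toM_inj by (metis injD)
  qed auto
qed

definition TM :: "(pt \<Rightarrow> 10 \<Rightarrow> 4 \<Rightarrow> 4 \<Rightarrow> real) \<Rightarrow> pt \<Rightarrow> 10 \<Rightarrow> real^4^4" where
  "TM Ts x i = toM (Ts x i)"
definition Rp :: "(pt \<Rightarrow> 10 \<Rightarrow> 4 \<Rightarrow> 4 \<Rightarrow> real) \<Rightarrow> pt \<Rightarrow> (10 \<Rightarrow> real) \<Rightarrow> real^4^4" where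
  "Rp Ts x u = toM (rep Ts x u)"

lemma Rp_sum: "Rp Ts x u = (\<Sum>i\<in>UNIV. u i *\<^sub>R TM Ts x i)"
  by (simp add: Rp_def TM_def toM_def rep_def vec_eq_iff sum_component)

lemma Rp_lin: "Rp Ts x (\<lambda>k. a * u k + b * v k) = a *\<^sub>R Rp Ts x u + b *\<^sub>R Rp Ts x v"
  by (simp add: Rp_sum scaleR_add_left sum.distrib scaleR_sum_right)

lemma mm_sum_l: "(C::real^4^4) ** (\<Sum>i\<in>F. f i) = (\<Sum>i\<in>F. C ** f i)"
  by (induction F rule: infinite_finite_induct) (simp_all add: matrix_add_ldistrib)

lemma cm_sum_l: "cm (\<Sum>i\<in>F. f i) C = (\<Sum>i\<in>F. cm (f i) C)"
  by (simp add: cm_def mm_sum_l mm_sum_r sum_subtractf)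
lemma cm_sum_r: "cm C (\<Sum>i\<in>F. f i) = (\<Sum>i\<in>F. cm C (f i))"
  by (simp add: cm_def mm_sum_l mm_sum_r sum_subtractf)
lemma cm_scale_l: "cm (a *\<^sub>R A) C = a *\<^sub>R cm A C"
  by (simp add: cm_def scalar_matrix_assoc matrix_scalar_ac scaleR_diff_right)
lemma cm_scale_r: "cm C (a *\<^sub>R A) = a *\<^sub>R cm C A"
  by (simp add: cm_def scalar_matrix_assoc matrix_scalar_ac scaleR_diff_right)

lemma TM_rel:
  assumes "\<forall>i j a b. (\<Sum>c\<in>UNIV. Ts x i a c * Ts x j c b) - (\<Sum>c\<in>UNIV. Ts x j a c * Ts x i c b)
        = (\<Sum>k\<in>UNIV. Tv x k i j * Ts x k a b)"
  shows "cm (TM Ts x i) (TM Ts x j) = (\<Sum>k\<in>UNIV. Tv x k i j *\<^sub>R TM Ts x k)"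
  using assms by (simp add: cm_def TM_def toM_def vec_eq_iff matrix_matrix_mult_def sum_component)

lemma Rp_bracket:
  assumes rel: "\<forall>i j a b. (\<Sum>c\<in>UNIV. Ts x i a c * Ts x j c b) - (\<Sum>c\<in>UNIV. Ts x j a c * Ts x i c b)
        = (\<Sum>k\<in>UNIV. Tv x k i j * Ts x k a b)"
  shows "Rp Ts x (bracket Tv x u v) = cm (Rp Ts x u) (Rp Ts x v)"
proof -
  have "Rp Ts x (bracket Tv x u v) = (\<Sum>k\<in>UNIV. (\<Sum>i\<in>UNIV. \<Sum>j\<in>UNIV. Tv x k i j * u i * v j) *\<^sub>R TM Ts x k)"
    by (simp add: Rp_sum bracket_def)
  also have "\<dots> = (\<Sum>i\<in>UNIV. \<Sum>j\<in>UNIV. (u i * v j) *\<^sub>R (\<Sum>k\<in>UNIV. Tv x k i j *\<^sub>R TM Ts x k))"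
  proof -
    have "(\<Sum>k\<in>UNIV. (\<Sum>i\<in>UNIV. \<Sum>j\<in>UNIV. Tv x k i j * u i * v j) *\<^sub>R TM Ts x k)
       = (\<Sum>k\<in>UNIV. \<Sum>i\<in>UNIV. \<Sum>j\<in>UNIV. (Tv x k i j * u i * v j) *\<^sub>R TM Ts x k)"
      by (simp add: scaleR_sum_left)
    also have "\<dots> = (\<Sum>i\<in>UNIV. \<Sum>k\<in>UNIV. \<Sum>j\<in>UNIV. (Tv x k i j * u i * v j) *\<^sub>R TM Ts x k)"
      by (rule sum.swap)
    also have "\<dots> = (\<Sum>i\<in>UNIV. \<Sum>j\<in>UNIV. \<Sum>k\<in>UNIV. (Tv x k i j * u i * v j) *\<^sub>R TM Ts x k)"
      by (rule sum.cong[OF refl], rule sum.swap)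
    also have "\<dots> = (\<Sum>i\<in>UNIV. \<Sum>j\<in>UNIV. (u i * v j) *\<^sub>R (\<Sum>k\<in>UNIV. Tv x k i j *\<^sub>R TM Ts x k))"
      by (simp add: scaleR_sum_right mult_ac)
    finally show ?thesis .
  qed
  also have "\<dots> = (\<Sum>i\<in>UNIV. \<Sum>j\<in>UNIV. (u i * v j) *\<^sub>R cm (TM Ts x i) (TM Ts x j))"
    by (simp add: TM_rel[where Ts=Ts and x=x and Tv=Tv, OF rel])
  also have "\<dots> = cm (Rp Ts x u) (Rp Ts x v)"
    by (simp add: Rp_sum cm_sum_l cm_sum_r cm_scale_l cm_scale_r scaleR_sum_right mult_ac)
       (rule sum.swap)
  finally show ?thesis .
qed

lemma TM_nonzero:
  assumes irr: "irreducible_rep Ts x"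
  shows "\<exists>i. TM Ts x i \<noteq> 0"
proof (rule ccontr)
  assume "\<not> ?thesis"
  then have z: "Ts x i a b = 0" for i a b
    by (auto simp: TM_def toM_def vec_eq_iff)
  define W :: "(real^4) set" where "W = span {axis 0 1}"
  have "subspace W" unfolding W_def by (rule subspace_span)
  moreover have "\<forall>u. \<forall>\<psi>\<in>W. (\<chi> a. \<Sum>b\<in>UNIV. rep Ts x u a b * \<psi> $ b) \<in> W"
  proof (intro allI ballI)
    fix u and \<psi> :: "real^4"
    have "(\<chi> a. \<Sum>b\<in>UNIV. rep Ts x u a b * \<psi> $ b) = 0" by (simp add: rep_def z vec_eq_iff)
    then show "(\<chi> a. \<Sum>b\<in>UNIV. rep Ts x u a b * \<psi> $ b) \<in> W" unfolding W_def using span_zero by metis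
  qed
  ultimately have "W = {0} \<or> W = UNIV" using irr unfolding irreducible_rep_def by blast
  moreover have "axis 0 1 \<in> W" unfolding W_def by (rule span_base) simp
  moreover have "axis 0 (1::real) \<noteq> 0" by (simp add: axis_eq_0_iff)
  moreover have "(axis 1 (1::real) :: real^4) \<notin> W"
  proof
    assume "(axis 1 (1::real) :: real^4) \<in> W"
    then obtain c where "(axis 1 (1::real) :: real^4) = c *\<^sub>R axis 0 1" unfolding W_def span_singleton by blast
    then have "(axis 1 (1::real) :: real^4) $ 1 = (c *\<^sub>R axis 0 (1::real) :: real^4) $ 1" by simp
    then show False by (simp add: axis_def)
  qed
  ultimately show False by auto
qed

context
  fixes Tv Ts x
  assumes rel: "\<forall>i j a b. (\<Sum>c\<in>UNIV. Ts x i a c * Ts x j c b) - (\<Sum>c\<in>UNIV. Ts x j a c * Ts x i c b)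
        = (\<Sum>k\<in>UNIV. Tv x k i j * Ts x k a b)"
    and iso: "lie_iso_sp4 Tv x" and irr: "irreducible_rep Ts x"
begin

lemma Rpb: "Rp Ts x (bracket Tv x u v) = cm (Rp Ts x u) (Rp Ts x v)"
  by (rule Rp_bracket[where Ts=Ts and x=x and Tv=Tv, OF rel])

lemma Rp_inj: "Rp Ts x u = 0 \<Longrightarrow> u = (\<lambda>k. 0)"
proof (rule ccontr)
  assume u: "Rp Ts x u = 0" "u \<noteq> (\<lambda>k. 0)"
  have "{u. Rp Ts x u = 0} = UNIV"
  proof (rule ideal_full[OF iso _ _ _ u(2)])
    show "u \<in> {u. Rp Ts x u = 0}" using u by simp
  qed (auto simp: Rp_lin Rpb cm_def)
  then have "Rp Ts x (\<lambda>k. if k = i then 1 else 0) = 0" for i by blast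
  then have "TM Ts x i = 0" for i by (simp add: Rp_sum if_distrib if_distribR sum.delta cong: if_cong)
  then show False using TM_nonzero[OF irr] by blast
qed

lemma trace_cm: "trace (cm A B ** C) = trace (B ** cm C A)"
proof -
  have "trace (cm A B ** C) = trace (A ** (B ** C)) - trace (B ** (A ** C))"
    by (simp add: cm_def mm_diff_r matrix_mul_assoc trace_def sum_subtractf)
  also have "\<dots> = trace (B ** C ** A) - trace (B ** A ** C)"
    using trace_mul_sym[of A "B ** C"] trace_mul_sym[of B "A ** C"] by (simp add: matrix_mul_assoc)
  also have "\<dots> = trace (B ** cm C A)"
    by (simp add: cm_def mm_diff_l matrix_mul_assoc trace_def sum_subtractf)
  finally show ?thesis .
qed

lemma trace_lin: "trace (Rp Ts x (\<lambda>k. a * u k + b * v k) ** C) = a * trace (Rp Ts x u ** C) + b * trace (Rp Ts x v ** C)"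
  by (simp add: Rp_lin mm_add_r trace_def sum.distrib sum_distrib_left matrix_scalar_ac scalar_matrix_assoc[symmetric])

lemma trace_form_nonzero: "\<exists>u w. trace (Rp Ts x u ** Rp Ts x w) \<noteq> 0"
proof (rule ccontr)
  assume "\<not> ?thesis"
  then have tz: "trace (Rp Ts x u ** Rp Ts x w) = 0" for u w by blast
  define f :: "real^10 \<Rightarrow> real \<times> real \<times> real \<times> real \<times> real \<times> real" where
    "f y = (let M = Rp Ts x (\<lambda>k. y$k) in (M$4$1 - M$1$4, M$4$2 - M$2$4, M$4$3 - M$3$4, M$1$2 - M$2$1, M$1$3 - M$3$1, M$2$3 - M$3$2))" for y
  have cont: "continuous_on UNIV f"
    unfolding f_def Let_def Rp_sum by (simp add: sum_component) (intro continuous_intros)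
  have "inj_on f UNIV"
  proof (rule inj_onI)
    fix y1 y2 assume eq: "f y1 = f y2"
    define d where "d = (\<lambda>k. 1 * y1$k + (-1) * y2$k)"
    define M where "M = Rp Ts x d"
    have Md: "M = Rp Ts x (\<lambda>k. y1$k) - Rp Ts x (\<lambda>k. y2$k)" unfolding M_def d_def Rp_lin by simp
    have symM: "M$p$q = M$q$p" for p q
      using eq exhaust_4[of p] exhaust_4[of q] unfolding f_def Let_def Md by auto
    have "trace (M ** M) = 0" unfolding M_def by (rule tz)
    then have "(\<Sum>p\<in>UNIV. \<Sum>q\<in>UNIV. (M$p$q)^2) = 0"
      by (simp add: trace_def matrix_matrix_mult_def symM power2_eq_square)
    then have "\<forall>p\<in>UNIV. (\<Sum>q\<in>UNIV. (M$p$q)^2) = 0"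
      by (subst (asm) sum_nonneg_eq_0_iff) (auto intro: sum_nonneg)
    then have "M$p$q = 0" for p q
      by (metis (no_types, lifting) UNIV_I finite sum_nonneg_eq_0_iff zero_le_power2 power_eq_0_iff zero_neq_numeral)
    then have "M = 0" by (simp add: vec_eq_iff)
    then have "d = (\<lambda>k. 0)" unfolding M_def by (rule Rp_inj)
    then show "y1 = y2" by (simp add: d_def vec_eq_iff fun_eq_iff)
  qed
  then have "DIM(real^10) \<le> DIM(real \<times> real \<times> real \<times> real \<times> real \<times> real)"
    by (intro invariance_of_dimension[OF cont]) auto
  then show False by simp
qed

lemma trace_nondeg:
  assumes "\<forall>w. trace (Rp Ts x u ** Rp Ts x w) = 0"
  shows "u = (\<lambda>k. 0)"
proof (rule ccontr)
  assume u0: "u \<noteq> (\<lambda>k. 0)"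
  let ?K = "{u. \<forall>w. trace (Rp Ts x u ** Rp Ts x w) = 0}"
  have "?K = UNIV"
  proof (rule ideal_full[OF iso _ _ _ u0])
    show "u \<in> ?K" using assms by simp
    fix w v assume "v \<in> ?K"
    then have v: "trace (Rp Ts x v ** Rp Ts x z) = 0" for z by simp
    have "trace (Rp Ts x (bracket Tv x w v) ** Rp Ts x z) = 0" for z
    proof -
      have "trace (Rp Ts x (bracket Tv x w v) ** Rp Ts x z) = trace (Rp Ts x v ** cm (Rp Ts x z) (Rp Ts x w))"
        unfolding Rpb by (rule trace_cm)
      also have "\<dots> = trace (Rp Ts x v ** Rp Ts x (bracket Tv x z w))" unfolding Rpb ..
      finally show ?thesis using v by simp
    qed
    then show "bracket Tv x w v \<in> ?K" by simp
  qed (simp add: trace_lin)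
  then show False using trace_form_nonzero by blast
qed

end


lemma line_diff: "(\<lambda>t::real. x + t *\<^sub>R axis k 1 :: pt) differentiable at 0"
  by (intro derivative_intros)

lemma pd_DERIV:
  assumes "f differentiable at x"
  shows "((\<lambda>t. f (x + t *\<^sub>R axis k 1)) has_real_derivative pd k f x) (at 0)"
proof -
  have "(f \<circ> (\<lambda>t::real. x + t *\<^sub>R axis k 1)) differentiable at 0"
    by (rule differentiable_chain_at[OF line_diff]) (simp add: assms)
  then have "(\<lambda>t. f (x + t *\<^sub>R axis k 1)) differentiable at 0" by (simp add: o_def)
  then show ?thesis unfolding pd_def DERIV_deriv_iff_real_differentiable .
qed

lemma pd_add: "f differentiable at x \<Longrightarrow> g differentiable at x \<Longrightarrow> pd k (\<lambda>y. f y + g y) x = pd k f x + pd k g x"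
  unfolding pd_def[of k "\<lambda>y. f y + g y"] by (intro DERIV_imp_deriv DERIV_add pd_DERIV)
lemma pd_diff: "f differentiable at x \<Longrightarrow> g differentiable at x \<Longrightarrow> pd k (\<lambda>y. f y - g y) x = pd k f x - pd k g x"
  unfolding pd_def[of k "\<lambda>y. f y - g y"] by (intro DERIV_imp_deriv DERIV_diff pd_DERIV)
lemma pd_mult: "f differentiable at x \<Longrightarrow> g differentiable at x \<Longrightarrow> pd k (\<lambda>y. f y * g y) x = pd k f x * g x + f x * pd k g x"
proof -
  assume f: "f differentiable at x" and g: "g differentiable at x"
  have "((\<lambda>t. f (x + t *\<^sub>R axis k 1) * g (x + t *\<^sub>R axis k 1)) has_real_derivative
      (pd k f x * g (x + 0 *\<^sub>R axis k 1) + pd k g x * f (x + 0 *\<^sub>R axis k 1))) (at 0)"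
    by (rule DERIV_mult[OF pd_DERIV[OF f, of k] pd_DERIV[OF g, of k]])
  then show ?thesis unfolding pd_def[of k "\<lambda>y. f y * g y"] by (intro DERIV_imp_deriv) (simp add: mult.commute pd_def)
qed
lemma pd_sum: "(\<And>i. i \<in> F \<Longrightarrow> f i differentiable at x) \<Longrightarrow> pd k (\<lambda>y. \<Sum>i\<in>F. f i y) x = (\<Sum>i\<in>F. pd k (f i) x)"
  unfolding pd_def[of k "\<lambda>y. \<Sum>i\<in>F. f i y"] by (intro DERIV_imp_deriv DERIV_sum pd_DERIV) auto
lemma pd_const: "pd k (\<lambda>y. c) x = 0"
  by (simp add: pd_def)

lemma pd_local:
  assumes U: "open U" "x \<in> U" and eq: "\<And>y. y \<in> U \<Longrightarrow> f y = g y"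
  shows "pd k f x = pd k g x"
proof -
  let ?l = "\<lambda>t::real. x + t *\<^sub>R axis k 1"
  have "open (?l -` U)" by (rule continuous_open_vimage[OF U(1)]) (intro allI continuous_intros)
  moreover have "0 \<in> ?l -` U" using U by simp
  ultimately have "\<forall>\<^sub>F t in nhds 0. t \<in> ?l -` U" by (rule eventually_nhds_in_open)
  then have "\<forall>\<^sub>F t in nhds 0. ?l t \<in> U" by simp
  then have "\<forall>\<^sub>F t in nhds 0. f (?l t) = g (?l t)" by eventually_elim (simp add: eq)
  then show ?thesis unfolding pd_def by (rule deriv_cong_ev) simp
qed

lemma iter_pd_snoc: "iter_pd (ks @ [k]) f = iter_pd ks (pd k f)"
  by (induction ks) auto

lemma smooth_pd: "smooth_on U f \<Longrightarrow> smooth_on U (pd k f)"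
  unfolding smooth_on_def by (metis iter_pd_snoc)

lemma smooth_diff: "smooth_on U f \<Longrightarrow> open U \<Longrightarrow> x \<in> U \<Longrightarrow> f differentiable at x"
  unfolding smooth_on_def
  by (metis iter_pd.simps(1) differentiable_on_def at_within_open)

lemma iter_pd_const: "\<exists>c'. iter_pd ks (\<lambda>y. c) = (\<lambda>y. c')"
  by (induction ks) (auto simp: pd_const)

lemma smooth_const: "smooth_on U (\<lambda>y. c)"
  unfolding smooth_on_def using iter_pd_const by (metis differentiable_const differentiable_on_def differentiable_at_withinI)

lemma pd_coord: "pd k (\<lambda>y. y$m) x = (if k = m then 1 else 0)"
proof -
  have "((\<lambda>t. (x + t *\<^sub>R axis k 1)$m) has_real_derivative (axis k 1 :: pt)$m) (at 0)"
    by (simp add: axis_def) (auto intro!: derivative_eq_intros)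
  then show ?thesis unfolding pd_def by (simp add: DERIV_imp_deriv axis_def)
qed

lemma smooth_coord: "smooth_on U (\<lambda>y. y$m)"
proof -
  have "\<exists>c'. iter_pd ks (\<lambda>y. y$m) = (\<lambda>y. c')" if "ks \<noteq> []" for ks
    using that
  proof (induction ks)
    case (Cons k ks)
    show ?case
    proof (cases "ks = []")
      case True then show ?thesis by (auto simp: pd_coord[abs_def])
    next
      case False then obtain c' where "iter_pd ks (\<lambda>y. y$m) = (\<lambda>y. c')" using Cons by blast
      then show ?thesis by (auto simp: pd_const)
    qed
  qed simp
  then show ?thesis unfolding smooth_on_def
    by (metis iter_pd.simps(1) differentiable_const differentiable_on_def differentiable_at_withinI
        bounded_linear_vec_nth bounded_linear_imp_differentiable)
qed


lemma sum_delta_r: fixes k :: "'a::finite" shows "(\<Sum>m\<in>UNIV. f m * (if m = k then 1 else 0)) = (f k :: real)"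
proof -
  have "(\<Sum>m\<in>UNIV. f m * (if m = k then 1 else 0)) = (\<Sum>m\<in>UNIV. if m = k then f m else 0)"
    by (rule sum.cong) auto
  then show ?thesis by (simp add: sum.delta sum.delta')
qed
lemma sum_delta_l: fixes k :: "'a::finite" shows "(\<Sum>m\<in>UNIV. (if m = k then 1 else 0) * f m) = (f k :: real)"
  using sum_delta_r[of f k] by (simp add: mult.commute)
lemma sum_delta_r': fixes k :: "'a::finite" shows "(\<Sum>m\<in>UNIV. f m * (if k = m then 1 else 0)) = (f k :: real)"
proof -
  have "(\<Sum>m\<in>UNIV. f m * (if k = m then 1 else 0)) = (\<Sum>m\<in>UNIV. if k = m then f m else 0)"
    by (rule sum.cong) auto
  then show ?thesis by (simp add: sum.delta sum.delta')
qed

locale fw =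
  fixes U Tv Ts Gv Gs Rv Rs
  assumes fw: "framework U Tv Ts Gv Gs Rv Rs"
begin

lemma openU: "open U" using fw by (simp add: framework_def)
lemma sm_Tv: "smooth_on U (\<lambda>x. Tv x k i j)" using fw by (simp add: framework_def)
lemma sm_Ts: "smooth_on U (\<lambda>x. Ts x i a b)" using fw by (simp add: framework_def)
lemma sm_Gv: "smooth_on U (\<lambda>x. Gv x l k j)" using fw by (simp add: framework_def)
lemma sm_Gs: "smooth_on U (\<lambda>x. Gs x a k b)" using fw by (simp add: framework_def)
lemma rel: "x \<in> U \<Longrightarrow> \<forall>i j a b. (\<Sum>c\<in>UNIV. Ts x i a c * Ts x j c b) - (\<Sum>c\<in>UNIV. Ts x j a c * Ts x i c b)
        = (\<Sum>k\<in>UNIV. Tv x k i j * Ts x k a b)" using fw by (simp add: framework_def)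
lemma iso: "x \<in> U \<Longrightarrow> lie_iso_sp4 Tv x" using fw by (simp add: framework_def)
lemma irr: "x \<in> U \<Longrightarrow> irreducible_rep Ts x" using fw by (simp add: framework_def)
lemma fun_h: "smooth_on U f \<Longrightarrow> x \<in> U \<Longrightarrow>
   nabla_nabla_fun Gv f i j x - nabla_nabla_fun Gv f j i x = (\<Sum>k\<in>UNIV. Tv x k i j * pd k f x)"
  using fw by (simp add: framework_def)
lemma vec_h: "(\<And>l. smooth_on U (\<lambda>y. v y l)) \<Longrightarrow> x \<in> U \<Longrightarrow>
   nabla_nabla_vec Gv v i j l x - nabla_nabla_vec Gv v j i l x
        = (\<Sum>k\<in>UNIV. Tv x k i j * nabla_vec Gv v k l x) + (\<Sum>k\<in>UNIV. Rv x l i j k * v x k)"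
  using fw by (simp add: framework_def)
lemma spin_h: "(\<And>a. smooth_on U (\<lambda>y. \<psi> y a)) \<Longrightarrow> x \<in> U \<Longrightarrow>
   nabla_nabla_spin Gv Gs \<psi> i j a x - nabla_nabla_spin Gv Gs \<psi> j i a x
        = (\<Sum>k\<in>UNIV. Tv x k i j * nabla_spin Gs \<psi> k a x) + (\<Sum>b\<in>UNIV. Rs x a i j b * \<psi> x b)"
  using fw by (simp add: framework_def)
lemma nTs: "x \<in> U \<Longrightarrow> nabla_Ts Gv Gs Ts k i a b x = 0"
  using fw by (simp add: framework_def)

lemma torsion: assumes x: "x \<in> U" shows "Gv x m i j - Gv x m j i = - Tv x m i j"
proof -
  have pdc: "pd j (\<lambda>y. y$m) = (\<lambda>y. if j = m then 1 else 0)" for j by (rule ext) (simp add: pd_coord)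
  have "nabla_nabla_fun Gv (\<lambda>y. y$m) i j x - nabla_nabla_fun Gv (\<lambda>y. y$m) j i x
     = (\<Sum>k\<in>UNIV. Tv x k i j * pd k (\<lambda>y. y$m) x)"
    by (rule fun_h[OF smooth_coord x])
  then show ?thesis
    by (simp add: nabla_nabla_fun_def pdc pd_const sum_delta_r' sum_delta_r)
qed

lemma Tv_eq: "x \<in> U \<Longrightarrow> Tv x m i j = Gv x m j i - Gv x m i j"
  using torsion[of x m i j] by simp

lemma Tv_anti: "x \<in> U \<Longrightarrow> Tv x m j i = - Tv x m i j"
  using torsion[of x m i j] torsion[of x m j i] by simp

lemma schwarz: assumes f: "smooth_on U f" and x: "x \<in> U" shows "pd i (pd j f) x = pd j (pd i f) x"
proof -
  have "nabla_nabla_fun Gv f i j x - nabla_nabla_fun Gv f j i x = (\<Sum>k\<in>UNIV. Tv x k i j * pd k f x)"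
    by (rule fun_h[OF f x])
  moreover have "(\<Sum>k\<in>UNIV. Tv x k i j * pd k f x) = (\<Sum>k\<in>UNIV. (Gv x k j i - Gv x k i j) * pd k f x)"
    by (intro sum.cong) (auto simp: Tv_eq[OF x] algebra_simps)
  ultimately show ?thesis
    by (simp add: nabla_nabla_fun_def algebra_simps sum_subtractf)
qed

lemma Rv_formula: assumes x: "x \<in> U"
  shows "Rv x l i j k = pd i (\<lambda>y. Gv y l j k) x - pd j (\<lambda>y. Gv y l i k) x
     + (\<Sum>m\<in>UNIV. Gv x l i m * Gv x m j k) - (\<Sum>m\<in>UNIV. Gv x l j m * Gv x m i k)"
proof -
  define v :: "pt \<Rightarrow> 10 \<Rightarrow> real" where "v = (\<lambda>y l. if l = k then 1 else 0)"
  have sv: "smooth_on U (\<lambda>y. v y l)" for l unfolding v_def by (rule smooth_const)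
  have nv: "nabla_vec Gv v j l = (\<lambda>y. Gv y l j k)" for j l
    by (rule ext) (simp add: nabla_vec_def v_def pd_const sum_delta_r)
  have h: "nabla_nabla_vec Gv v i j l x - nabla_nabla_vec Gv v j i l x
        = (\<Sum>m\<in>UNIV. Tv x m i j * nabla_vec Gv v m l x) + (\<Sum>m\<in>UNIV. Rv x l i j m * v x m)"
    by (rule vec_h[OF sv x])
  have t: "(\<Sum>m\<in>UNIV. Tv x m i j * Gv x l m k) = (\<Sum>m\<in>UNIV. (Gv x m j i - Gv x m i j) * Gv x l m k)"
    by (intro sum.cong) (auto simp: Tv_eq[OF x] algebra_simps)
  from h show ?thesis
    unfolding nabla_nabla_vec_def nv
    by (simp add: v_def sum_delta_l Tv_eq[OF x] algebra_simps sum_subtractf sum.distrib)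
qed

lemma Rs_formula: assumes x: "x \<in> U"
  shows "Rs x a i j b = pd i (\<lambda>y. Gs y a j b) x - pd j (\<lambda>y. Gs y a i b) x
     + (\<Sum>c\<in>UNIV. Gs x a i c * Gs x c j b) - (\<Sum>c\<in>UNIV. Gs x a j c * Gs x c i b)"
proof -
  define \<psi> :: "pt \<Rightarrow> 4 \<Rightarrow> real" where "\<psi> = (\<lambda>y a. if a = b then 1 else 0)"
  have sv: "smooth_on U (\<lambda>y. \<psi> y a)" for a unfolding \<psi>_def by (rule smooth_const)
  have nv: "nabla_spin Gs \<psi> j a = (\<lambda>y. Gs y a j b)" for j a
    by (rule ext) (simp add: nabla_spin_def \<psi>_def pd_const sum_delta_r)
  have h: "nabla_nabla_spin Gv Gs \<psi> i j a x - nabla_nabla_spin Gv Gs \<psi> j i a x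
        = (\<Sum>m\<in>UNIV. Tv x m i j * nabla_spin Gs \<psi> m a x) + (\<Sum>c\<in>UNIV. Rs x a i j c * \<psi> x c)"
    by (rule spin_h[OF sv x])
  have t: "(\<Sum>m\<in>UNIV. Tv x m i j * Gs x a m b) = (\<Sum>m\<in>UNIV. (Gv x m j i - Gv x m i j) * Gs x a m b)"
    by (intro sum.cong) (auto simp: Tv_eq[OF x] algebra_simps)
  from h show ?thesis
    unfolding nabla_nabla_spin_def nv
    by (simp add: \<psi>_def sum_delta_l Tv_eq[OF x] algebra_simps sum_subtractf sum.distrib)
qed

end


lemma cm_jacobi: "cm C (cm B A) - cm B (cm C A) = - cm (cm B C) A"
  by (simp add: cm_def mm_diff_l mm_diff_r matrix_mul_assoc algebra_simps)

lemma cm_diff_l: "cm (A - B) C = cm A C - cm B C"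
  by (simp add: cm_def mm_diff_l mm_diff_r algebra_simps)
lemma cm_add_l: "cm (A + B) C = cm A C + cm B C"
  by (simp add: cm_def mm_add_r matrix_add_ldistrib algebra_simps)
lemma cm_diff_r: "cm C (A - B) = cm C A - cm C B"
  by (simp add: cm_def mm_diff_l mm_diff_r algebra_simps)
lemma cm_add_r: "cm C (A + B) = cm C A + cm C B"
  by (simp add: cm_def mm_add_r matrix_add_ldistrib algebra_simps)

lemma curv_alg:
  fixes T :: "10 \<Rightarrow> real^4^4" and g :: "10 \<Rightarrow> 10 \<Rightarrow> 10 \<Rightarrow> real" and dg :: "10 \<Rightarrow> 10 \<Rightarrow> 10 \<Rightarrow> 10 \<Rightarrow> real"
    and GS :: "10 \<Rightarrow> real^4^4" and dGS :: "10 \<Rightarrow> 10 \<Rightarrow> real^4^4"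
  defines "EE \<equiv> \<lambda>s i. (\<Sum>m\<in>UNIV. g m s i *\<^sub>R T m) - cm (GS s) (T i)"
  defines "DD \<equiv> \<lambda>s t i. (\<Sum>m\<in>UNIV. dg s m t i *\<^sub>R T m + g m t i *\<^sub>R EE s m) - (cm (dGS s t) (T i) + cm (GS t) (EE s i))"
  shows "DD s t i - DD t s i = (\<Sum>l\<in>UNIV. (dg s l t i - dg t l s i + (\<Sum>m\<in>UNIV. g l s m * g m t i - g l t m * g m s i)) *\<^sub>R T l)
          - cm (dGS s t - dGS t s + cm (GS s) (GS t)) (T i)"
proof -
  have A: "(\<Sum>m\<in>UNIV. g m t i *\<^sub>R EE s m) = (\<Sum>n\<in>UNIV. (\<Sum>m\<in>UNIV. g n s m * g m t i) *\<^sub>R T n) - cm (GS s) (\<Sum>m\<in>UNIV. g m t i *\<^sub>R T m)" for s t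
  proof -
    have "(\<Sum>m\<in>UNIV. g m t i *\<^sub>R EE s m) = (\<Sum>m\<in>UNIV. \<Sum>n\<in>UNIV. (g n s m * g m t i) *\<^sub>R T n) - (\<Sum>m\<in>UNIV. g m t i *\<^sub>R cm (GS s) (T m))"
      unfolding EE_def by (simp add: scaleR_diff_right scaleR_sum_right sum_subtractf mult.commute)
    also have "(\<Sum>m\<in>UNIV. \<Sum>n\<in>UNIV. (g n s m * g m t i) *\<^sub>R T n) = (\<Sum>n\<in>UNIV. (\<Sum>m\<in>UNIV. g n s m * g m t i) *\<^sub>R T n)"
      by (subst sum.swap) (simp add: scaleR_sum_left)
    also have "(\<Sum>m\<in>UNIV. g m t i *\<^sub>R cm (GS s) (T m)) = cm (GS s) (\<Sum>m\<in>UNIV. g m t i *\<^sub>R T m)"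
      by (simp add: cm_sum_r cm_scale_r)
    finally show ?thesis .
  qed
  have B: "cm (GS t) (EE s i) = cm (GS t) (\<Sum>m\<in>UNIV. g m s i *\<^sub>R T m) - cm (GS t) (cm (GS s) (T i))" for s t
    unfolding EE_def by (simp add: cm_diff_r)
  have "DD s t i - DD t s i =
      ((\<Sum>l\<in>UNIV. dg s l t i *\<^sub>R T l) - (\<Sum>l\<in>UNIV. dg t l s i *\<^sub>R T l))
    + ((\<Sum>n\<in>UNIV. (\<Sum>m\<in>UNIV. g n s m * g m t i) *\<^sub>R T n) - (\<Sum>n\<in>UNIV. (\<Sum>m\<in>UNIV. g n t m * g m s i) *\<^sub>R T n))
    - cm (dGS s t - dGS t s) (T i)
    + (cm (GS t) (cm (GS s) (T i)) - cm (GS s) (cm (GS t) (T i)))"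
    unfolding DD_def sum.distrib A B cm_diff_l by (simp add: algebra_simps)
  also have "\<dots> = (\<Sum>l\<in>UNIV. (dg s l t i - dg t l s i + (\<Sum>m\<in>UNIV. g l s m * g m t i - g l t m * g m s i)) *\<^sub>R T l)
          - cm (dGS s t - dGS t s + cm (GS s) (GS t)) (T i)"
    unfolding cm_jacobi cm_add_l by (simp add: algebra_simps sum.distrib sum_subtractf scaleR_diff_left scaleR_add_left)
  finally show ?thesis .
qed


definition pdM :: "10 \<Rightarrow> (pt \<Rightarrow> real^4^4) \<Rightarrow> pt \<Rightarrow> real^4^4" where
  "pdM k F x = (\<chi> a b. pd k (\<lambda>y. F y $ a $ b) x)"
definition mdiff :: "(pt \<Rightarrow> real^4^4) \<Rightarrow> pt \<Rightarrow> bool" where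
  "mdiff F x \<longleftrightarrow> (\<forall>a b. (\<lambda>y. F y $ a $ b) differentiable at x)"

lemma mdiff_diff: "mdiff F x \<Longrightarrow> mdiff G x \<Longrightarrow> mdiff (\<lambda>y. F y - G y) x"
  unfolding mdiff_def by (auto intro: differentiable_diff)
lemma mdiff_add: "mdiff F x \<Longrightarrow> mdiff G x \<Longrightarrow> mdiff (\<lambda>y. F y + G y) x"
  unfolding mdiff_def by (auto intro: differentiable_add)
lemma mdiff_sum: fixes S :: "'i::finite set" shows "(\<And>i. mdiff (F i) x) \<Longrightarrow> mdiff (\<lambda>y. \<Sum>i\<in>S. F i y) x"
  unfolding mdiff_def by (auto simp: sum_component intro!: differentiable_sum)
lemma mdiff_scale: "f differentiable at x \<Longrightarrow> mdiff F x \<Longrightarrow> mdiff (\<lambda>y. f y *\<^sub>R F y) x"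
  unfolding mdiff_def by (auto intro!: differentiable_mult)
lemma mdiff_mm: "mdiff F x \<Longrightarrow> mdiff G x \<Longrightarrow> mdiff (\<lambda>y. F y ** G y) x"
  unfolding mdiff_def matrix_matrix_mult_def by (auto intro!: differentiable_sum differentiable_mult)
lemma mdiff_cm: "mdiff F x \<Longrightarrow> mdiff G x \<Longrightarrow> mdiff (\<lambda>y. cm (F y) (G y)) x"
  unfolding cm_def by (intro mdiff_diff mdiff_mm)

lemma pdM_diff: "mdiff F x \<Longrightarrow> mdiff G x \<Longrightarrow> pdM k (\<lambda>y. F y - G y) x = pdM k F x - pdM k G x"
  unfolding mdiff_def pdM_def by (simp add: vec_eq_iff pd_diff)
lemma pdM_add: "mdiff F x \<Longrightarrow> mdiff G x \<Longrightarrow> pdM k (\<lambda>y. F y + G y) x = pdM k F x + pdM k G x"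
  unfolding mdiff_def pdM_def by (simp add: vec_eq_iff pd_add)
lemma pdM_sum: fixes S :: "'i::finite set" shows "(\<And>i. mdiff (F i) x) \<Longrightarrow> pdM k (\<lambda>y. \<Sum>i\<in>S. F i y) x = (\<Sum>i\<in>S. pdM k (F i) x)"
  unfolding mdiff_def pdM_def by (simp add: vec_eq_iff sum_component pd_sum)
lemma pdM_scale: "f differentiable at x \<Longrightarrow> mdiff F x \<Longrightarrow> pdM k (\<lambda>y. f y *\<^sub>R F y) x = pd k f x *\<^sub>R F x + f x *\<^sub>R pdM k F x"
  unfolding mdiff_def pdM_def by (simp add: vec_eq_iff pd_mult)
lemma pdM_mm: "mdiff F x \<Longrightarrow> mdiff G x \<Longrightarrow> pdM k (\<lambda>y. F y ** G y) x = pdM k F x ** G x + F x ** pdM k G x"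
proof -
  assume F: "mdiff F x" and G: "mdiff G x"
  have "pd k (\<lambda>y. \<Sum>c\<in>UNIV. F y $ a $ c * G y $ c $ b) x
      = (\<Sum>c\<in>UNIV. pd k (\<lambda>y. F y $ a $ c) x * G x $ c $ b + F x $ a $ c * pd k (\<lambda>y. G y $ c $ b) x)" for a b
  proof -
    have "pd k (\<lambda>y. \<Sum>c\<in>UNIV. F y $ a $ c * G y $ c $ b) x = (\<Sum>c\<in>UNIV. pd k (\<lambda>y. F y $ a $ c * G y $ c $ b) x)"
      by (rule pd_sum) (use F G in \<open>auto simp: mdiff_def intro!: differentiable_mult\<close>)
    also have "\<dots> = (\<Sum>c\<in>UNIV. pd k (\<lambda>y. F y $ a $ c) x * G x $ c $ b + F x $ a $ c * pd k (\<lambda>y. G y $ c $ b) x)"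
      by (rule sum.cong[OF refl], rule pd_mult) (use F G in \<open>auto simp: mdiff_def\<close>)
    finally show ?thesis .
  qed
  then show ?thesis unfolding pdM_def matrix_matrix_mult_def by (simp add: vec_eq_iff sum.distrib)
qed
lemma pdM_cm: "mdiff F x \<Longrightarrow> mdiff G x \<Longrightarrow> pdM k (\<lambda>y. cm (F y) (G y)) x = cm (pdM k F x) (G x) + cm (F x) (pdM k G x)"
  unfolding cm_def by (simp add: pdM_diff mdiff_mm pdM_mm algebra_simps)
lemma pdM_local: "open U \<Longrightarrow> x \<in> U \<Longrightarrow> (\<And>y. y \<in> U \<Longrightarrow> F y = G y) \<Longrightarrow> pdM k F x = pdM k G x"
proof -
  assume U: "open U" "x \<in> U" and eq: "\<And>y. y \<in> U \<Longrightarrow> F y = G y"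
  have "pd k (\<lambda>y. F y $ a $ b) x = pd k (\<lambda>y. G y $ a $ b) x" for a b
    by (rule pd_local[OF U]) (simp add: eq)
  then show ?thesis unfolding pdM_def by simp
qed

definition GSf :: "(pt \<Rightarrow> 4 \<Rightarrow> 10 \<Rightarrow> 4 \<Rightarrow> real) \<Rightarrow> 10 \<Rightarrow> pt \<Rightarrow> real^4^4" where
  "GSf Gs k y = (\<chi> a b. Gs y a k b)"
definition RSm :: "(pt \<Rightarrow> 4 \<Rightarrow> 10 \<Rightarrow> 10 \<Rightarrow> 4 \<Rightarrow> real) \<Rightarrow> pt \<Rightarrow> 10 \<Rightarrow> 10 \<Rightarrow> real^4^4" where
  "RSm Rs x s t = (\<chi> a b. Rs x a s t b)"

context fw begin

lemma TM_ent: "(\<lambda>y. TM Ts y i $ a $ b) = (\<lambda>y. Ts y i a b)"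
  by (simp add: TM_def toM_def)

lemma mdiff_TM: "x \<in> U \<Longrightarrow> mdiff (\<lambda>y. TM Ts y i) x"
  unfolding mdiff_def TM_ent using smooth_diff[OF sm_Ts openU] by blast
lemma mdiff_dTM: "x \<in> U \<Longrightarrow> mdiff (\<lambda>y. pdM k (\<lambda>y. TM Ts y i) y) x"
  unfolding mdiff_def pdM_def TM_ent using smooth_diff[OF smooth_pd[OF sm_Ts] openU] by simp
lemma mdiff_GS: "x \<in> U \<Longrightarrow> mdiff (GSf Gs k) x"
  unfolding mdiff_def GSf_def using smooth_diff[OF sm_Gs openU] by simp
lemma diff_Gv: "x \<in> U \<Longrightarrow> (\<lambda>y. Gv y m k i) differentiable at x"
  using smooth_diff[OF sm_Gv openU] by blast

lemma dT: assumes x: "x \<in> U"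
  shows "pdM k (\<lambda>y. TM Ts y i) x = (\<Sum>m\<in>UNIV. Gv x m k i *\<^sub>R TM Ts x m) - cm (GSf Gs k x) (TM Ts x i)"
proof -
  have "nabla_Ts Gv Gs Ts k i a b x = 0" for a b by (rule nTs[OF x])
  then show ?thesis
    by (simp add: nabla_Ts_def pdM_def TM_ent vec_eq_iff cm_def matrix_matrix_mult_def GSf_def sum_component)
       (simp add: TM_def toM_def algebra_simps)
qed

lemma RSm_formula: assumes x: "x \<in> U"
  shows "RSm Rs x s t = pdM s (GSf Gs t) x - pdM t (GSf Gs s) x + cm (GSf Gs s x) (GSf Gs t x)"
  by (simp add: RSm_def Rs_formula[OF x] vec_eq_iff pdM_def GSf_def cm_def matrix_matrix_mult_def)

lemma RT: assumes x: "x \<in> U"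
  shows "(\<Sum>l\<in>UNIV. Rv x l s t i *\<^sub>R TM Ts x l) = cm (RSm Rs x s t) (TM Ts x i)"
proof -
  define T where "T = (\<lambda>m. TM Ts x m)"
  define g where "g = (\<lambda>m k i. Gv x m k i)"
  define dg where "dg = (\<lambda>s m t i. pd s (\<lambda>y. Gv y m t i) x)"
  define GS where "GS = (\<lambda>k. GSf Gs k x)"
  define dGS where "dGS = (\<lambda>s t. pdM s (GSf Gs t) x)"
  define EE where "EE \<equiv> \<lambda>s i. (\<Sum>m\<in>UNIV. g m s i *\<^sub>R T m) - cm (GS s) (T i)"
  define DD where "DD \<equiv> \<lambda>s t i. (\<Sum>m\<in>UNIV. dg s m t i *\<^sub>R T m + g m t i *\<^sub>R EE s m) - (cm (dGS s t) (T i) + cm (GS t) (EE s i))"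
  have dTE: "pdM s (\<lambda>y. TM Ts y i) x = EE s i" for s i unfolding EE_def T_def g_def GS_def by (rule dT[OF x])
  have H: "pdM s (\<lambda>y. pdM t (\<lambda>y. TM Ts y i) y) x = DD s t i" for s t i
  proof -
    have "pdM s (\<lambda>y. pdM t (\<lambda>y. TM Ts y i) y) x
        = pdM s (\<lambda>y. (\<Sum>m\<in>UNIV. Gv y m t i *\<^sub>R TM Ts y m) - cm (GSf Gs t y) (TM Ts y i)) x"
      by (rule pdM_local[OF openU x]) (rule dT)
    also have "\<dots> = (\<Sum>m\<in>UNIV. pd s (\<lambda>y. Gv y m t i) x *\<^sub>R TM Ts x m + Gv x m t i *\<^sub>R pdM s (\<lambda>y. TM Ts y m) x)
          - (cm (pdM s (GSf Gs t) x) (TM Ts x i) + cm (GSf Gs t x) (pdM s (\<lambda>y. TM Ts y i) x))"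
      by (simp add: pdM_diff pdM_sum pdM_scale pdM_cm mdiff_sum mdiff_scale mdiff_cm mdiff_TM[OF x]
          mdiff_GS[OF x] diff_Gv[OF x])
    also have "\<dots> = DD s t i" unfolding DD_def dTE T_def g_def dg_def GS_def dGS_def ..
    finally show ?thesis .
  qed
  have sch: "pdM s (\<lambda>y. pdM t (\<lambda>y. TM Ts y i) y) x = pdM t (\<lambda>y. pdM s (\<lambda>y. TM Ts y i) y) x"
    unfolding pdM_def TM_ent by (simp add: schwarz[OF sm_Ts x])
  have "DD s t i - DD t s i = (\<Sum>l\<in>UNIV. (dg s l t i - dg t l s i + (\<Sum>m\<in>UNIV. g l s m * g m t i - g l t m * g m s i)) *\<^sub>R T l)
          - cm (dGS s t - dGS t s + cm (GS s) (GS t)) (T i)"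
    unfolding DD_def EE_def by (rule curv_alg)
  moreover have "DD s t i - DD t s i = 0" using sch H by simp
  moreover have "(dg s l t i - dg t l s i + (\<Sum>m\<in>UNIV. g l s m * g m t i - g l t m * g m s i)) = Rv x l s t i" for l
    unfolding Rv_formula[OF x] dg_def g_def by (simp add: sum_subtractf)
  moreover have "dGS s t - dGS t s + cm (GS s) (GS t) = RSm Rs x s t"
    unfolding RSm_formula[OF x] dGS_def GS_def ..
  ultimately show ?thesis unfolding T_def by simp
qed

end


lemma cm_deriv: "cm (cm G A) B + cm A (cm G B) = cm G (cm A B)"
  by (simp add: cm_def mm_diff_l mm_diff_r matrix_mul_assoc algebra_simps)

lemma cm_jac3: "cm (cm A B) C + cm (cm B C) A + cm (cm C A) B = 0"
  by (simp add: cm_def mm_diff_l mm_diff_r matrix_mul_assoc algebra_simps)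

lemma tv_alg:
  fixes T :: "10 \<Rightarrow> real^4^4" and c g :: "10 \<Rightarrow> 10 \<Rightarrow> 10 \<Rightarrow> real" and GS :: "10 \<Rightarrow> real^4^4" and dc :: "10 \<Rightarrow> real"
  assumes rel: "\<And>i j. cm (T i) (T j) = (\<Sum>k\<in>UNIV. c k i j *\<^sub>R T k)"
  defines "EE \<equiv> \<lambda>m i. (\<Sum>n\<in>UNIV. g n m i *\<^sub>R T n) - cm (GS m) (T i)"
  shows "cm (EE m i) (T j) + cm (T i) (EE m j) - (\<Sum>k\<in>UNIV. dc k *\<^sub>R T k + c k i j *\<^sub>R EE m k)
       = (\<Sum>k\<in>UNIV. ((\<Sum>n\<in>UNIV. g n m i * c k n j) + (\<Sum>n\<in>UNIV. g n m j * c k i n) - (\<Sum>n\<in>UNIV. c n i j * g k m n) - dc k) *\<^sub>R T k)"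
proof -
  have 1: "cm (EE m i) (T j) = (\<Sum>k\<in>UNIV. (\<Sum>n\<in>UNIV. g n m i * c k n j) *\<^sub>R T k) - cm (cm (GS m) (T i)) (T j)"
  proof -
    have "cm (EE m i) (T j) = (\<Sum>n\<in>UNIV. g n m i *\<^sub>R cm (T n) (T j)) - cm (cm (GS m) (T i)) (T j)"
      unfolding EE_def cm_diff_l cm_sum_l cm_scale_l ..
    also have "(\<Sum>n\<in>UNIV. g n m i *\<^sub>R cm (T n) (T j)) = (\<Sum>n\<in>UNIV. \<Sum>k\<in>UNIV. (g n m i * c k n j) *\<^sub>R T k)"
      unfolding rel by (simp add: scaleR_sum_right)
    also have "\<dots> = (\<Sum>k\<in>UNIV. (\<Sum>n\<in>UNIV. g n m i * c k n j) *\<^sub>R T k)"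
      by (subst sum.swap) (simp add: scaleR_sum_left)
    finally show ?thesis .
  qed
  have 2: "cm (T i) (EE m j) = (\<Sum>k\<in>UNIV. (\<Sum>n\<in>UNIV. g n m j * c k i n) *\<^sub>R T k) - cm (T i) (cm (GS m) (T j))"
  proof -
    have "cm (T i) (EE m j) = (\<Sum>n\<in>UNIV. g n m j *\<^sub>R cm (T i) (T n)) - cm (T i) (cm (GS m) (T j))"
      unfolding EE_def cm_diff_r cm_sum_r cm_scale_r ..
    also have "(\<Sum>n\<in>UNIV. g n m j *\<^sub>R cm (T i) (T n)) = (\<Sum>n\<in>UNIV. \<Sum>k\<in>UNIV. (g n m j * c k i n) *\<^sub>R T k)"
      unfolding rel by (simp add: scaleR_sum_right)
    also have "\<dots> = (\<Sum>k\<in>UNIV. (\<Sum>n\<in>UNIV. g n m j * c k i n) *\<^sub>R T k)"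
      by (subst sum.swap) (simp add: scaleR_sum_left)
    finally show ?thesis .
  qed
  have 3: "(\<Sum>k\<in>UNIV. c k i j *\<^sub>R EE m k) = (\<Sum>k\<in>UNIV. (\<Sum>n\<in>UNIV. c n i j * g k m n) *\<^sub>R T k) - cm (GS m) (cm (T i) (T j))"
  proof -
    have "(\<Sum>k\<in>UNIV. c k i j *\<^sub>R EE m k) = (\<Sum>k\<in>UNIV. \<Sum>n\<in>UNIV. (c k i j * g n m k) *\<^sub>R T n) - (\<Sum>k\<in>UNIV. c k i j *\<^sub>R cm (GS m) (T k))"
      unfolding EE_def by (simp add: scaleR_diff_right scaleR_sum_right sum_subtractf)
    also have "(\<Sum>k\<in>UNIV. \<Sum>n\<in>UNIV. (c k i j * g n m k) *\<^sub>R T n) = (\<Sum>k\<in>UNIV. (\<Sum>n\<in>UNIV. c n i j * g k m n) *\<^sub>R T k)"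
      by (subst sum.swap) (simp add: scaleR_sum_left)
    also have "(\<Sum>k\<in>UNIV. c k i j *\<^sub>R cm (GS m) (T k)) = cm (GS m) (cm (T i) (T j))"
      unfolding rel by (simp add: cm_sum_r cm_scale_r)
    finally show ?thesis .
  qed
  show ?thesis
    unfolding sum.distrib 1 2 3 using cm_deriv[of "GS m" "T i" "T j"]
    by (simp add: algebra_simps sum.distrib sum_subtractf scaleR_diff_left scaleR_add_left)
qed

context fw begin

lemma TMrel: "x \<in> U \<Longrightarrow> cm (TM Ts x i) (TM Ts x j) = (\<Sum>k\<in>UNIV. Tv x k i j *\<^sub>R TM Ts x k)"
  by (rule TM_rel[where Ts=Ts and x=x and Tv=Tv, OF rel])

lemma indep: "x \<in> U \<Longrightarrow> (\<Sum>k\<in>UNIV. c k *\<^sub>R TM Ts x k) = 0 \<Longrightarrow> c k = 0"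
  using Rp_inj[where Tv=Tv and Ts=Ts and x=x, OF rel iso irr, of c] by (simp add: Rp_sum fun_eq_iff)

lemma jacobi: assumes x: "x \<in> U"
  shows "(\<Sum>m\<in>UNIV. Tv x m i j * Tv x l m k + Tv x m j k * Tv x l m i + Tv x m k i * Tv x l m j) = 0"
proof -
  let ?T = "TM Ts x"
  have c: "cm (cm (?T a) (?T b)) (?T d) = (\<Sum>l\<in>UNIV. (\<Sum>m\<in>UNIV. Tv x m a b * Tv x l m d) *\<^sub>R ?T l)" for a b d
  proof -
    have "cm (cm (?T a) (?T b)) (?T d) = (\<Sum>m\<in>UNIV. \<Sum>l\<in>UNIV. (Tv x m a b * Tv x l m d) *\<^sub>R ?T l)"
      unfolding TMrel[OF x] cm_sum_l cm_scale_l by (simp add: scaleR_sum_right)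
    also have "\<dots> = (\<Sum>l\<in>UNIV. (\<Sum>m\<in>UNIV. Tv x m a b * Tv x l m d) *\<^sub>R ?T l)"
      by (subst sum.swap) (simp add: scaleR_sum_left)
    finally show ?thesis .
  qed
  have "(\<Sum>l\<in>UNIV. (\<Sum>m\<in>UNIV. Tv x m i j * Tv x l m k + Tv x m j k * Tv x l m i + Tv x m k i * Tv x l m j) *\<^sub>R ?T l) = 0"
    using cm_jac3[of "?T i" "?T j" "?T k"] unfolding c by (simp add: sum.distrib scaleR_add_left)
  then show ?thesis by (rule indep[OF x])
qed

lemma DTv: assumes x: "x \<in> U"
  shows "pd m (\<lambda>y. Tv y k i j) x + (\<Sum>n\<in>UNIV. Gv x k m n * Tv x n i j) - (\<Sum>n\<in>UNIV. Gv x n m i * Tv x k n j) - (\<Sum>n\<in>UNIV. Gv x n m j * Tv x k i n) = 0"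
proof -
  have eq: "pdM m (\<lambda>y. cm (TM Ts y i) (TM Ts y j)) x = pdM m (\<lambda>y. \<Sum>k\<in>UNIV. Tv y k i j *\<^sub>R TM Ts y k) x"
    by (rule pdM_local[OF openU x]) (rule TMrel)
  have diffTv: "(\<lambda>y. Tv y k i j) differentiable at x" for k i j using smooth_diff[OF sm_Tv openU x] .
  have "pdM m (\<lambda>y. cm (TM Ts y i) (TM Ts y j)) x = cm (pdM m (\<lambda>y. TM Ts y i) x) (TM Ts x j) + cm (TM Ts x i) (pdM m (\<lambda>y. TM Ts y j) x)"
    by (rule pdM_cm[OF mdiff_TM[OF x] mdiff_TM[OF x]])
  moreover have "pdM m (\<lambda>y. \<Sum>k\<in>UNIV. Tv y k i j *\<^sub>R TM Ts y k) x = (\<Sum>k\<in>UNIV. pd m (\<lambda>y. Tv y k i j) x *\<^sub>R TM Ts x k + Tv x k i j *\<^sub>R pdM m (\<lambda>y. TM Ts y k) x)"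
    by (simp add: pdM_sum pdM_scale mdiff_scale mdiff_TM[OF x] diffTv)
  ultimately have "cm (pdM m (\<lambda>y. TM Ts y i) x) (TM Ts x j) + cm (TM Ts x i) (pdM m (\<lambda>y. TM Ts y j) x)
      - (\<Sum>k\<in>UNIV. pd m (\<lambda>y. Tv y k i j) x *\<^sub>R TM Ts x k + Tv x k i j *\<^sub>R pdM m (\<lambda>y. TM Ts y k) x) = 0"
    using eq by simp
  then have that: "cm (pdM m (\<lambda>y. TM Ts y i) x) (TM Ts x j) + cm (TM Ts x i) (pdM m (\<lambda>y. TM Ts y j) x)
      - (\<Sum>k\<in>UNIV. pd m (\<lambda>y. Tv y k i j) x *\<^sub>R TM Ts x k + Tv x k i j *\<^sub>R pdM m (\<lambda>y. TM Ts y k) x) = 0" .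
  have "(\<Sum>k\<in>UNIV. ((\<Sum>n\<in>UNIV. Gv x n m i * Tv x k n j) + (\<Sum>n\<in>UNIV. Gv x n m j * Tv x k i n) - (\<Sum>n\<in>UNIV. Tv x n i j * Gv x k m n) - pd m (\<lambda>y. Tv y k i j) x) *\<^sub>R TM Ts x k) = 0"
  proof -
    note key = tv_alg[where T="TM Ts x" and c="Tv x" and g="Gv x" and GS="\<lambda>k. GSf Gs k x"
        and dc="\<lambda>k. pd m (\<lambda>y. Tv y k i j) x" and m=m and i=i and j=j, OF TMrel[OF x]]
    show ?thesis using that[unfolded dT[OF x]] key[symmetric] by simp
  qed
  then have "(\<Sum>n\<in>UNIV. Gv x n m i * Tv x k n j) + (\<Sum>n\<in>UNIV. Gv x n m j * Tv x k i n) - (\<Sum>n\<in>UNIV. Tv x n i j * Gv x k m n) - pd m (\<lambda>y. Tv y k i j) x = 0"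
    by (rule indep[OF x])
  then show ?thesis by (simp add: mult.commute)
qed

end


context fw begin

lemma dtors: assumes x: "x \<in> U"
  shows "pd m (\<lambda>y. Gv y l i j) x - pd m (\<lambda>y. Gv y l j i) x = - pd m (\<lambda>y. Tv y l i j) x"
proof -
  have "pd m (\<lambda>y. Gv y l i j - Gv y l j i) x = pd m (\<lambda>y. 0 - Tv y l i j) x"
    by (rule pd_local[OF openU x]) (simp add: torsion)
  moreover have "pd m (\<lambda>y. Gv y l i j - Gv y l j i) x = pd m (\<lambda>y. Gv y l i j) x - pd m (\<lambda>y. Gv y l j i) x"
    by (rule pd_diff) (use smooth_diff[OF sm_Gv openU x] in auto)
  moreover have "pd m (\<lambda>y. 0 - Tv y l i j) x = pd m (\<lambda>y. 0) x - pd m (\<lambda>y. Tv y l i j) x"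
    by (rule pd_diff) (use smooth_diff[OF sm_Tv openU x] in auto)
  ultimately show ?thesis by (simp add: pd_const)
qed

lemma bianchi: assumes x: "x \<in> U"
  shows "Rv x l i j k + Rv x l j k i + Rv x l k i j = 0"
proof -
  let ?g = "Gv x" and ?c = "Tv x"
  let ?dT = "\<lambda>m l i j. pd m (\<lambda>y. Tv y l i j) x"
  have dTe: "?dT m l i j = (\<Sum>n\<in>UNIV. - (?g l m n * ?c n i j) + ?g n m i * ?c l n j + ?g n m j * ?c l i n)" for m l i j
    using DTv[OF x, of m l i j] by (simp add: sum.distrib sum_negf sum_subtractf)
  have R3: "Rv x l i j k + Rv x l j k i + Rv x l k i j
     = - (?dT i l j k + ?dT j l k i + ?dT k l i j)
       + (\<Sum>m\<in>UNIV. ?g l i m * ?g m j k - ?g l j m * ?g m i k + ?g l j m * ?g m k i - ?g l k m * ?g m j i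
            + ?g l k m * ?g m i j - ?g l i m * ?g m k j)"
    unfolding Rv_formula[OF x]
    using dtors[OF x, of i l j k] dtors[OF x, of j l k i] dtors[OF x, of k l i j]
    by (simp add: sum.distrib sum_subtractf)
  also have "\<dots> = (\<Sum>n\<in>UNIV.
        (?g l i n * ?c n j k - ?g n i j * ?c l n k - ?g n i k * ?c l j n)
      + (?g l j n * ?c n k i - ?g n j k * ?c l n i - ?g n j i * ?c l k n)
      + (?g l k n * ?c n i j - ?g n k i * ?c l n j - ?g n k j * ?c l i n)
      + (?g l i n * ?g n j k - ?g l j n * ?g n i k + ?g l j n * ?g n k i - ?g l k n * ?g n j i
            + ?g l k n * ?g n i j - ?g l i n * ?g n k j))"
    unfolding dTe by (simp add: sum.distrib sum_subtractf sum_negf algebra_simps)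
  also have "\<dots> = (\<Sum>n\<in>UNIV. ?c n i j * ?c l n k + ?c n j k * ?c l n i + ?c n k i * ?c l n j)"
    by (rule sum.cong[OF refl]) (simp add: Tv_eq[OF x] algebra_simps)
  also have "\<dots> = 0" by (rule jacobi[OF x])
  finally show ?thesis .
qed

end


lemma sum_delta_l': fixes k :: "'a::finite" shows "(\<Sum>m\<in>UNIV. (if k = m then 1 else 0) * f m) = (f k :: real)"
  using sum_delta_r'[of f k] by (simp add: mult.commute)

lemma swap4: "(\<Sum>a\<in>A. \<Sum>b\<in>B. \<Sum>c\<in>C. \<Sum>d\<in>D. f a b c d) = (\<Sum>c\<in>C. \<Sum>d\<in>D. \<Sum>a\<in>A. \<Sum>b\<in>B. f a b c d)"
proof -
  have "(\<Sum>a\<in>A. \<Sum>b\<in>B. \<Sum>c\<in>C. \<Sum>d\<in>D. f a b c d) = (\<Sum>a\<in>A. \<Sum>c\<in>C. \<Sum>b\<in>B. \<Sum>d\<in>D. f a b c d)"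
    by (rule sum.cong[OF refl], rule sum.swap)
  also have "\<dots> = (\<Sum>a\<in>A. \<Sum>c\<in>C. \<Sum>d\<in>D. \<Sum>b\<in>B. f a b c d)"
    by (rule sum.cong[OF refl], rule sum.cong[OF refl], rule sum.swap)
  also have "\<dots> = (\<Sum>c\<in>C. \<Sum>a\<in>A. \<Sum>d\<in>D. \<Sum>b\<in>B. f a b c d)"
    by (rule sum.swap)
  also have "\<dots> = (\<Sum>c\<in>C. \<Sum>d\<in>D. \<Sum>a\<in>A. \<Sum>b\<in>B. f a b c d)"
    by (rule sum.cong[OF refl], rule sum.swap)
  finally show ?thesis .
qed

lemma final_alg:
  fixes g G :: "10 \<Rightarrow> 10 \<Rightarrow> real" and R :: "10 \<Rightarrow> 10 \<Rightarrow> 10 \<Rightarrow> 10 \<Rightarrow> real" and F :: "10 \<Rightarrow> 10 \<Rightarrow> real"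
  assumes Gg: "\<And>a c. (\<Sum>b\<in>UNIV. G a b * g b c) = (if a = c then 1 else 0)"
    and Gsym: "\<And>a b. G a b = G b a" and gsym: "\<And>a b. g a b = g b a"
    and Ranti: "\<And>l s t i. R l t s i = - R l s t i"
    and Fanti: "\<And>i j. F j i = - F i j"
    and skew: "\<And>s t i w. (\<Sum>l\<in>UNIV. R l s t i * g l w) + (\<Sum>l\<in>UNIV. R l s t w * g l i) = 0"
    and bian: "\<And>l i j k. R l i j k + R l j k i + R l k i j = 0"
  shows "(\<Sum>i\<in>UNIV. \<Sum>j\<in>UNIV. \<Sum>s\<in>UNIV. \<Sum>t\<in>UNIV. G i s * G j t * (- (\<Sum>a\<in>UNIV. R a s t i * F a j) - (\<Sum>a\<in>UNIV. R a s t j * F i a))) = 0"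
proof -
  define L where "L b s t i = (\<Sum>a\<in>UNIV. g b a * R a s t i)" for b s t i
  have RL: "R a s t i = (\<Sum>b\<in>UNIV. G a b * L b s t i)" for a s t i
  proof -
    have "(\<Sum>b\<in>UNIV. G a b * L b s t i) = (\<Sum>b\<in>UNIV. \<Sum>c\<in>UNIV. G a b * g b c * R c s t i)"
      by (simp add: L_def sum_distrib_left mult.assoc)
    also have "\<dots> = (\<Sum>c\<in>UNIV. (\<Sum>b\<in>UNIV. G a b * g b c) * R c s t i)"
      by (subst sum.swap) (simp add: sum_distrib_right)
    also have "\<dots> = R a s t i" by (simp add: Gg sum_delta_l')
    finally show ?thesis by simp
  qed
  have Lsk: "L b s t i = - L i s t b" for b s t i
    using skew[of s t i b] by (simp add: L_def gsym mult.commute eq_neg_iff_add_eq_0)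
  define P where "P t b = (\<Sum>s\<in>UNIV. R s s t b)" for t b
  have GL: "(\<Sum>i\<in>UNIV. G s i * L i s t b) = R s s t b" for s t b
    by (simp add: RL)
  have tr0: "(\<Sum>s\<in>UNIV. R s t b s) = 0" for t b
  proof -
    define X where "X = (\<Sum>s\<in>UNIV. \<Sum>c\<in>UNIV. G s c * L c t b s)"
    have "X = - (\<Sum>s\<in>UNIV. \<Sum>c\<in>UNIV. G s c * L s t b c)"
      unfolding X_def by (subst Lsk) (simp add: sum_negf)
    also have "(\<Sum>s\<in>UNIV. \<Sum>c\<in>UNIV. G s c * L s t b c) = X"
      unfolding X_def by (subst sum.swap) (simp add: Gsym)
    finally have "X = 0" by simp
    then show ?thesis unfolding X_def by (simp add: RL)
  qed
  have Psym: "P t b = P b t" for t b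
  proof -
    have "(\<Sum>s\<in>UNIV. R s s t b + R s t b s + R s b s t) = 0" by (simp add: bian)
    then have "P t b + (\<Sum>s\<in>UNIV. R s t b s) + (\<Sum>s\<in>UNIV. R s b s t) = 0"
      by (simp add: P_def sum.distrib)
    then show ?thesis using tr0 by (simp add: P_def Ranti[of _ b _ t] sum_negf)
  qed
  have C1: "(\<Sum>i\<in>UNIV. \<Sum>s\<in>UNIV. G i s * R a s t i) = - (\<Sum>b\<in>UNIV. G a b * P t b)" for a t
  proof -
    have "(\<Sum>i\<in>UNIV. \<Sum>s\<in>UNIV. G i s * R a s t i) = (\<Sum>i\<in>UNIV. \<Sum>s\<in>UNIV. \<Sum>b\<in>UNIV. G a b * (G i s * L b s t i))"
      by (simp add: RL sum_distrib_left mult_ac)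
    also have "\<dots> = (\<Sum>i\<in>UNIV. \<Sum>b\<in>UNIV. \<Sum>s\<in>UNIV. G a b * (G i s * L b s t i))"
      by (rule sum.cong[OF refl], rule sum.swap)
    also have "\<dots> = (\<Sum>b\<in>UNIV. \<Sum>i\<in>UNIV. \<Sum>s\<in>UNIV. G a b * (G i s * L b s t i))"
      by (rule sum.swap)
    also have "\<dots> = (\<Sum>b\<in>UNIV. G a b * (\<Sum>i\<in>UNIV. \<Sum>s\<in>UNIV. G i s * L b s t i))"
      by (simp add: sum_distrib_left)
    also have "\<dots> = - (\<Sum>b\<in>UNIV. G a b * (\<Sum>s\<in>UNIV. \<Sum>i\<in>UNIV. G s i * L i s t b))"
    proof -
      have "(\<Sum>i\<in>UNIV. \<Sum>s\<in>UNIV. G i s * L b s t i) = - (\<Sum>s\<in>UNIV. \<Sum>i\<in>UNIV. G s i * L i s t b)" for b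
        by (subst sum.swap) (simp add: Lsk[of b] Gsym sum_negf)
      then show ?thesis by (simp add: sum_negf)
    qed
    also have "\<dots> = - (\<Sum>b\<in>UNIV. G a b * P t b)" by (simp add: GL P_def)
    finally show ?thesis .
  qed
  define T1 where "T1 = (\<Sum>i\<in>UNIV. \<Sum>j\<in>UNIV. \<Sum>s\<in>UNIV. \<Sum>t\<in>UNIV. G i s * G j t * (\<Sum>a\<in>UNIV. R a s t i * F a j))"
  define W where "W = (\<Sum>j\<in>UNIV. \<Sum>t\<in>UNIV. \<Sum>a\<in>UNIV. \<Sum>b\<in>UNIV. G j t * F a j * G a b * P t b)"
  have T1W: "T1 = - W"
  proof -
    have "T1 = (\<Sum>i\<in>UNIV. \<Sum>j\<in>UNIV. \<Sum>s\<in>UNIV. \<Sum>t\<in>UNIV. \<Sum>a\<in>UNIV. G j t * F a j * (G i s * R a s t i))"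
      unfolding T1_def by (simp add: sum_distrib_left mult_ac)
    also have "\<dots> = (\<Sum>j\<in>UNIV. \<Sum>i\<in>UNIV. \<Sum>s\<in>UNIV. \<Sum>t\<in>UNIV. \<Sum>a\<in>UNIV. G j t * F a j * (G i s * R a s t i))"
      by (rule sum.swap)
    also have "\<dots> = (\<Sum>j\<in>UNIV. \<Sum>t\<in>UNIV. \<Sum>a\<in>UNIV. \<Sum>i\<in>UNIV. \<Sum>s\<in>UNIV. G j t * F a j * (G i s * R a s t i))"
      by (rule sum.cong[OF refl], rule swap4)
    also have "\<dots> = (\<Sum>j\<in>UNIV. \<Sum>t\<in>UNIV. \<Sum>a\<in>UNIV. G j t * F a j * (\<Sum>i\<in>UNIV. \<Sum>s\<in>UNIV. G i s * R a s t i))"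
      by (simp add: sum_distrib_left)
    also have "\<dots> = - W" unfolding C1 W_def by (simp add: sum_distrib_left sum_negf mult_ac)
    finally show ?thesis .
  qed
  have W0: "W = 0"
  proof -
    have "W = (\<Sum>a\<in>UNIV. \<Sum>b\<in>UNIV. \<Sum>j\<in>UNIV. \<Sum>t\<in>UNIV. G j t * F a j * G a b * P t b)"
      unfolding W_def by (rule swap4)
    also have "\<dots> = (\<Sum>a\<in>UNIV. \<Sum>b\<in>UNIV. \<Sum>j\<in>UNIV. \<Sum>t\<in>UNIV. - (G a b * F j a * G j t * P b t))"
    proof -
      have pw: "G j t * F a j * G a b * P t b = - (G a b * F j a * G j t * P b t)" for a b j t
        using Fanti[of a j] Psym[of b t] by simp
      show ?thesis by (intro sum.cong refl, rule pw)
    qed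
    also have "\<dots> = - W" unfolding W_def by (simp add: sum_negf)
    finally show ?thesis by simp
  qed
  have T2: "(\<Sum>i\<in>UNIV. \<Sum>j\<in>UNIV. \<Sum>s\<in>UNIV. \<Sum>t\<in>UNIV. G i s * G j t * (\<Sum>a\<in>UNIV. R a s t j * F i a)) = T1"
  proof -
    have e1: "(\<Sum>i\<in>UNIV. \<Sum>j\<in>UNIV. \<Sum>s\<in>UNIV. \<Sum>t\<in>UNIV. G i s * G j t * (\<Sum>a\<in>UNIV. R a s t j * F i a))
       = (\<Sum>j\<in>UNIV. \<Sum>i\<in>UNIV. \<Sum>t\<in>UNIV. \<Sum>s\<in>UNIV. G j t * G i s * (\<Sum>a\<in>UNIV. R a t s i * F j a))" by simp
    have e2: "(\<Sum>j\<in>UNIV. \<Sum>i\<in>UNIV. \<Sum>t\<in>UNIV. \<Sum>s\<in>UNIV. G j t * G i s * (\<Sum>a\<in>UNIV. R a t s i * F j a))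
       = (\<Sum>i\<in>UNIV. \<Sum>j\<in>UNIV. \<Sum>s\<in>UNIV. \<Sum>t\<in>UNIV. G j t * G i s * (\<Sum>a\<in>UNIV. R a t s i * F j a))"
      by (subst sum.swap) (rule sum.cong[OF refl], rule sum.cong[OF refl], rule sum.swap)
    have pw: "R a t s i * F j a = R a s t i * F a j" for a t s i j
      using Fanti[of a j] Ranti[of a s t i] by simp
    have e3: "(\<Sum>i\<in>UNIV. \<Sum>j\<in>UNIV. \<Sum>s\<in>UNIV. \<Sum>t\<in>UNIV. G j t * G i s * (\<Sum>a\<in>UNIV. R a t s i * F j a)) = T1"
      unfolding T1_def pw by (simp add: mult_ac)
    show ?thesis using e1 e2 e3 by simp
  qed
  show ?thesis
    using T1W W0 T2 unfolding T1_def by (simp add: right_diff_distrib sum_subtractf sum_negf)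
qed


lemma trace_add: "trace (A + B) = trace A + trace (B::real^4^4)"
  by (simp add: trace_def sum.distrib)
lemma trace_diff: "trace (A - B) = trace A - trace (B::real^4^4)"
  by (simp add: trace_def sum_subtractf)
lemma trace_scale: "trace (c *\<^sub>R A) = c * trace (A::real^4^4)"
  by (simp add: trace_def sum_distrib_left)
lemma trace_0: "trace (0::real^4^4) = 0"
  by (simp add: trace_def)
lemma trace_sum: "trace (\<Sum>i\<in>F. f i) = (\<Sum>i\<in>F. trace (f i :: real^4^4))"
  by (induction F rule: infinite_finite_induct) (simp_all add: trace_add trace_0)
lemma mm_scale_r: "(B::real^4^4) ** (c *\<^sub>R A) = c *\<^sub>R (B ** A)"
  by (simp add: matrix_scalar_ac scalar_matrix_assoc)

lemma trace_lin_l: "trace ((\<Sum>l\<in>UNIV. c l *\<^sub>R A l) ** (B::real^4^4)) = (\<Sum>l\<in>(UNIV::10 set). c l * trace (A l ** B))"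
  by (simp add: mm_sum_r trace_sum scalar_matrix_assoc[symmetric] trace_scale)
lemma trace_lin_r: "trace ((B::real^4^4) ** (\<Sum>l\<in>UNIV. c l *\<^sub>R A l)) = (\<Sum>l\<in>(UNIV::10 set). c l * trace (B ** A l))"
  by (simp add: mm_sum_l trace_sum mm_scale_r trace_scale)

lemma trace_skew: "trace (cm R A ** B) + trace (cm R B ** A) = 0"
proof -
  have 1: "trace (A ** R ** B) = trace (R ** B ** A)" using trace_mul_sym[of A "R ** B"] by (simp add: matrix_mul_assoc)
  have 2: "trace (B ** R ** A) = trace (R ** A ** B)" using trace_mul_sym[of B "R ** A"] by (simp add: matrix_mul_assoc)
  show ?thesis unfolding cm_def mm_diff_r trace_diff 1 2 by simp
qed

context fw begin

lemma metric_tr: "metric Ts x i j = trace (TM Ts x i ** TM Ts x j)"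
  by (simp add: metric_def trace_def matrix_matrix_mult_def TM_def toM_def)

lemma metric_sym: "metric Ts x i j = metric Ts x j i"
  unfolding metric_def by (subst sum.swap) (simp add: mult.commute)

lemma trace_Rp: "trace (Rp Ts x u ** Rp Ts x w) = (\<Sum>i\<in>UNIV. \<Sum>j\<in>UNIV. u i * w j * metric Ts x i j)"
  unfolding Rp_sum trace_lin_l trace_lin_r metric_tr by (simp add: sum_distrib_left mult_ac) (rule sum.swap)

definition Mx where "Mx x = (\<chi> p q. metric Ts x p q)"

lemma Mx_inv: assumes x: "x \<in> U" shows "invertible (Mx x)"
proof -
  have "Mx x *v c = 0 \<longrightarrow> c = 0" for c
  proof
    assume c: "Mx x *v c = 0"
    have ci: "(\<Sum>j\<in>UNIV. metric Ts x i j * c$j) = 0" for i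
      using c by (simp add: Mx_def vec_eq_iff matrix_vector_mult_def)
    have "trace (Rp Ts x (\<lambda>k. c$k) ** Rp Ts x w) = 0" for w
    proof -
      have "trace (Rp Ts x (\<lambda>k. c$k) ** Rp Ts x w) = trace (Rp Ts x w ** Rp Ts x (\<lambda>k. c$k))"
        by (rule trace_mul_sym)
      also have "\<dots> = (\<Sum>i\<in>UNIV. w i * (\<Sum>j\<in>UNIV. metric Ts x i j * c$j))"
        unfolding trace_Rp by (simp add: sum_distrib_left mult_ac)
      also have "\<dots> = 0" by (simp add: ci)
      finally show ?thesis .
    qed
    then have "(\<lambda>k. c$k) = (\<lambda>k. 0)"
      by (intro trace_nondeg[where Tv=Tv and Ts=Ts and x=x, OF rel[OF x] iso[OF x] irr[OF x]]) blast
    then show "c = 0" by (simp add: vec_eq_iff fun_eq_iff)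
  qed
  then show ?thesis unfolding invertible_left_inverse matrix_left_invertible_ker by blast
qed

lemma Minv: assumes x: "x \<in> U"
  shows "Mx x ** matrix_inv (Mx x) = mat 1 \<and> matrix_inv (Mx x) ** Mx x = mat 1"
  using Mx_inv[OF x] unfolding invertible_def matrix_inv_def by (rule someI_ex)

lemma Gg: assumes x: "x \<in> U"
  shows "(\<Sum>b\<in>UNIV. inv_metric Ts x a b * metric Ts x b c) = (if a = c then 1 else 0)"
proof -
  have "(matrix_inv (Mx x) ** Mx x) $ a $ c = (if a = c then 1 else 0)" using Minv[OF x] by (simp add: mat_def)
  moreover have "inv_metric Ts x a b = matrix_inv (Mx x) $ a $ b" for a b by (simp add: inv_metric_def Mx_def)
  moreover have "metric Ts x b c = Mx x $ b $ c" for b c by (simp add: Mx_def)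
  ultimately show ?thesis by (simp add: matrix_matrix_mult_def)
qed

lemma Gsym: assumes x: "x \<in> U" shows "inv_metric Ts x a b = inv_metric Ts x b a"
proof -
  let ?M = "Mx x" and ?N = "matrix_inv (Mx x)"
  have tM: "transpose ?M = ?M" by (simp add: Mx_def transpose_def vec_eq_iff metric_sym)
  have "transpose ?N ** ?M = mat 1"
    using arg_cong[OF conjunct1[OF Minv[OF x]], of transpose] by (simp add: matrix_transpose_mul tM)
  then have "transpose ?N = ?N"
  proof -
    assume h: "transpose ?N ** ?M = mat 1"
    have "transpose ?N = transpose ?N ** (?M ** ?N)" using conjunct1[OF Minv[OF x]] by simp
    also have "\<dots> = (transpose ?N ** ?M) ** ?N" by (rule matrix_mul_assoc)
    also have "\<dots> = ?N" using h by simp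
    finally show ?thesis .
  qed
  then have "(transpose ?N) $ a $ b = ?N $ a $ b" by simp
  then show ?thesis by (simp add: inv_metric_def Mx_def transpose_def)
qed

lemma Rv_anti: "x \<in> U \<Longrightarrow> Rv x l t s i = - Rv x l s t i"
  by (simp add: Rv_formula)

lemma Rs_anti: "x \<in> U \<Longrightarrow> Rs x a j i b = - Rs x a i j b"
  by (simp add: Rs_formula)

lemma F_anti: assumes x: "x \<in> U" shows "field_tensor Rs x j i = - field_tensor Rs x i j"
proof -
  have "(\<Sum>a\<in>UNIV. Rs x a j i a) = (\<Sum>a\<in>UNIV. - Rs x a i j a)"
    by (rule sum.cong[OF refl], rule Rs_anti[OF x])
  then show ?thesis unfolding field_tensor_def by (simp add: sum_negf)
qed

lemma skew: assumes x: "x \<in> U"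
  shows "(\<Sum>l\<in>UNIV. Rv x l s t i * metric Ts x l w) + (\<Sum>l\<in>UNIV. Rv x l s t w * metric Ts x l i) = 0"
proof -
  have "(\<Sum>l\<in>UNIV. Rv x l s t i * metric Ts x l w) = trace (cm (RSm Rs x s t) (TM Ts x i) ** TM Ts x w)" for i w
    unfolding RT[OF x, symmetric] trace_lin_l metric_tr ..
  then show ?thesis using trace_skew by simp
qed

lemma main: assumes x: "x \<in> U"
  shows "(\<Sum>i\<in>UNIV. \<Sum>j\<in>UNIV. \<Sum>s\<in>UNIV. \<Sum>t\<in>UNIV. inv_metric Ts x i s * inv_metric Ts x j t * curv_on_F Rv Rs x s t i j) = 0"
  unfolding curv_on_F_def
  apply (rule final_alg[where g="metric Ts x"])
  apply (rule Gg[OF x])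
  apply (rule Gsym[OF x])
  apply (rule metric_sym)
  apply (rule Rv_anti[OF x])
  apply (rule F_anti[OF x])
  apply (rule skew[OF x])
  apply (rule bianchi[OF x])
  done

end

theorem mainTheorem9:
  assumes "framework U Tv Ts Gv Gs Rv Rs"
    and "x \<in> U"
  shows "(\<Sum>i\<in>UNIV. \<Sum>j\<in>UNIV. \<Sum>s\<in>UNIV. \<Sum>t\<in>UNIV. inv_metric Ts x i s * inv_metric Ts x j t * curv_on_F Rv Rs x s t i j) = 0"
proof -
  interpret fw U Tv Ts Gv Gs Rv Rs by (rule fw.intro) (rule assms(1))
  show ?thesis by (rule main[OF assms(2)])
qed


end
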